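(* Let $H$ be a finite abelian group of odd order $d$, where $d$ has no divisor congruent to $3\bmod 4$, and let $\lambda:H\times H\to\mathbb{Q}/\mathbb{Z}$ be a non-degenerate symmetric bilinear form. Let $\Lambda_0=\{g\in H:\lambda(g,g)=0\}$. Then $\Lambda_0=\{0\}$ if and only if $H\cong\mathbb{Z}_{q'}\oplus\mathbb{Z}_q$, where $q'$ is a product of distinct primes $p_i\equiv 1\pmod 4$ and $q\mid q'$, and for each prime $p_i\mid q$ there is a basis $(g_1,g_2)$ of the $p_i$-Sylow subgroup $\mathbb{Z}_{p_i}\oplus\mathbb{Z}_{p_i}$ of $H$ such that, identifying $\frac1{p_i}\mathbb{Z}/\mathbb{Z}\subset\mathbb{Q}/\mathbb{Z}$ with $\mathbb{Z}_{p_i}$, one has $\lambda(e_1g_1+e_2g_2,\,e_1g_1+e_2g_2)=e_1^2+\beta e_2^2$ for all $e_1,e_2\in\mathbb{Z}$, where $\beta$ is not a quadratic residue modulo $p_i$.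
   Context: $\mathbb{Z}_n=\mathbb{Z}/n\mathbb{Z}$. The $p$-Sylow subgroup of a finite abelian group is its subgroup of elements of $p$-power order. *)

theory Defs
  imports "HOL-Algebra.Algebra" "HOL-Number_Theory.Number_Theory" "HOL-Computational_Algebra.Squarefree"
begin

text \<open>A Q/Z-valued pairing is represented by a rat-valued function; two values are
equal in Q/Z iff their difference is an integer.\<close>

definition sym_bilinear_QZ :: "('a, 'b) monoid_scheme \<Rightarrow> ('a \<Rightarrow> 'a \<Rightarrow> rat) \<Rightarrow> bool" where
  "sym_bilinear_QZ G lam \<longleftrightarrow>
     (\<forall>x\<in>carrier G. \<forall>y\<in>carrier G. lam x y - lam y x \<in> \<int>) \<and>
     (\<forall>x\<in>carrier G. \<forall>y\<in>carrier G. \<forall>z\<in>carrier G.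
        lam (x \<otimes>\<^bsub>G\<^esub> y) z - (lam x z + lam y z) \<in> \<int>)"

definition nondegenerate_QZ :: "('a, 'b) monoid_scheme \<Rightarrow> ('a \<Rightarrow> 'a \<Rightarrow> rat) \<Rightarrow> bool" where
  "nondegenerate_QZ G lam \<longleftrightarrow>
     (\<forall>x\<in>carrier G. (\<forall>y\<in>carrier G. lam x y \<in> \<int>) \<longrightarrow> x = \<one>\<^bsub>G\<^esub>)"

definition isotropic_set :: "('a, 'b) monoid_scheme \<Rightarrow> ('a \<Rightarrow> 'a \<Rightarrow> rat) \<Rightarrow> 'a set" where
  "isotropic_set G lam = {g \<in> carrier G. lam g g \<in> \<int>}"

definition sylow_part :: "('a, 'b) monoid_scheme \<Rightarrow> nat \<Rightarrow> 'a set" where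
  "sylow_part G p = {x \<in> carrier G. \<exists>k::nat. x [^]\<^bsub>G\<^esub> (p ^ k) = \<one>\<^bsub>G\<^esub>}"

definition is_basis2 :: "('a, 'b) monoid_scheme \<Rightarrow> nat \<Rightarrow> 'a set \<Rightarrow> 'a \<Rightarrow> 'a \<Rightarrow> bool" where
  "is_basis2 G p P g1 g2 \<longleftrightarrow> g1 \<in> P \<and> g2 \<in> P \<and>
     bij_betw (\<lambda>(e1, e2). g1 [^]\<^bsub>G\<^esub> e1 \<otimes>\<^bsub>G\<^esub> g2 [^]\<^bsub>G\<^esub> e2)
       ({0..<p} \<times> {0..<p} :: (nat \<times> nat) set) P"

end

theory Submission
  imports Defs
begin

lemma sq_minus_one_exists:
  fixes p :: nat
  assumes "Factorial_Ring.prime p" "p mod 4 = 1"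
  shows "\<exists>i::int. [i^2 = -1] (mod int p)"
proof -
  have p2': "2 < p" using assms prime_ge_2_nat[of p] by presburger
  then have p2: "2 < int p" by simp
  have e: "[Legendre (-1) (int p) = (-1) ^ ((p - 1) div 2)] (mod int p)"
    using euler_criterion[OF assms(1) p2'] by simp
  have "even ((p - 1) div 2)" using assms(2) by presburger
  then have "[Legendre (-1) (int p) = 1] (mod int p)" using e by simp
  moreover have "\<not> [(-1::int) = 0] (mod int p)"
  proof
    assume "[(-1::int) = 0] (mod int p)"
    then have "int p dvd -1" by (simp add: cong_0_iff)
    then have "int p dvd 1" by simp
    then have "int p \<le> 1" using zdvd_imp_le[of "int p" 1] by simp
    then show False using p2 by simp
  qed
  moreover have "\<not> [(-1::int) = 1] (mod int p)"
  proof
    assume "[(-1::int) = 1] (mod int p)"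
    then have "int p dvd (-1) - 1" by (simp add: cong_iff_dvd_diff)
    then have "int p dvd 2" by simp
    then have "int p \<le> 2" using zdvd_imp_le[of "int p" 2] by simp
    then show False using p2 by simp
  qed
  ultimately have "QuadRes (int p) (-1)"
    unfolding Legendre_def by (auto split: if_splits)
  then show ?thesis unfolding QuadRes_def by blast
qed

lemma sq_inj_half:
  fixes p :: int
  assumes "Factorial_Ring.prime p" "\<not> p dvd A" "x \<in> {0..(p-1) div 2}" "y \<in> {0..(p-1) div 2}"
    "(A * x^2) mod p = (A * y^2) mod p"
  shows "x = y"
proof -
  have "p dvd A * x^2 - A * y^2" using assms(5) mod_eq_dvd_iff by blast
  moreover have "A * x^2 - A * y^2 = A * ((x - y) * (x + y))" by (simp add: algebra_simps power2_eq_square)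
  ultimately have "p dvd A * ((x - y) * (x + y))" by simp
  then have "p dvd (x - y) * (x + y)" using assms(1,2) prime_dvd_mult_iff by blast
  then have d: "p dvd (x - y) \<or> p dvd (x + y)" using assms(1) prime_dvd_mult_iff by blast
  have p1: "p > 1" using assms(1) prime_gt_1_int by blast
  have h: "2 * ((p - 1) div 2) \<le> p - 1" by simp
  have xy: "0 \<le> x" "0 \<le> y" "2 * x \<le> p - 1" "2 * y \<le> p - 1" using assms(3,4) h by auto
  have "x - y = 0" if "p dvd (x - y)"
  proof (rule ccontr)
    assume "x - y \<noteq> 0"
    then have "\<bar>p\<bar> \<le> \<bar>x - y\<bar>" using dvd_imp_le_int that by blast
    moreover have "\<bar>x - y\<bar> < p" using xy p1 by linarith
    ultimately show False using p1 by linarith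
  qed
  moreover have "x + y = 0" if "p dvd (x + y)"
  proof (rule ccontr)
    assume "x + y \<noteq> 0"
    then have "\<bar>p\<bar> \<le> \<bar>x + y\<bar>" using dvd_imp_le_int that by blast
    moreover have "\<bar>x + y\<bar> < p" using xy p1 by linarith
    ultimately show False using p1 by linarith
  qed
  ultimately show ?thesis using d xy by linarith
qed

lemma two_squares_represent:
  fixes p :: int
  assumes "Factorial_Ring.prime p" "\<not> p dvd A" "\<not> p dvd B" and odd: "odd p"
  shows "\<exists>x y. p dvd A * x^2 + B * y^2 - c"
proof -
  define H where "H = {0..(p-1) div 2}"
  define S1 where "S1 = (\<lambda>x. (A * x^2) mod p) ` H"
  define S2 where "S2 = (\<lambda>y. (c - B * y^2) mod p) ` H"
  have p1: "p > 1" using assms(1) prime_gt_1_int by blast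
  have inj1: "inj_on (\<lambda>x. (A * x^2) mod p) H"
  proof (rule inj_onI)
    fix x y assume xy: "x \<in> H" "y \<in> H" "(A * x^2) mod p = (A * y^2) mod p"
    then show "x = y" using sq_inj_half[OF assms(1,2)] unfolding H_def by blast
  qed
  have inj2: "inj_on (\<lambda>y. (c - B * y^2) mod p) H"
  proof (rule inj_onI)
    fix x y assume xy: "x \<in> H" "y \<in> H" "(c - B * x^2) mod p = (c - B * y^2) mod p"
    then have "p dvd (c - B * x^2) - (c - B * y^2)" using mod_eq_dvd_iff by blast
    then have "p dvd B * y^2 - B * x^2" by simp
    then have "(B * y^2) mod p = (B * x^2) mod p" using mod_eq_dvd_iff by blast
    then have "y = x" using sq_inj_half[OF assms(1,3)] xy(1,2) unfolding H_def by blast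
    then show "x = y" by simp
  qed
  have cH: "card H = nat ((p-1) div 2) + 1" unfolding H_def using p1 by simp
  have c1: "card S1 = card H" unfolding S1_def using card_image inj1 by blast
  have c2: "card S2 = card H" unfolding S2_def using card_image inj2 by blast
  have "S1 \<subseteq> {0..<p}" unfolding S1_def using p1 by auto
  moreover have "S2 \<subseteq> {0..<p}" unfolding S2_def using p1 by auto
  ultimately have sub: "S1 \<union> S2 \<subseteq> {0..<p}" by blast
  have "card (S1 \<union> S2) \<le> card {0..<p}" using sub by (intro card_mono) auto
  then have "card (S1 \<union> S2) \<le> nat p" by simp
  moreover have "2 * ((p-1) div 2) = p - 1" using odd by presburger
  then have "nat p < Suc (Suc (nat ((p - 1) div 2) + nat ((p - 1) div 2)))" using p1 by linarith
  then have "card S1 + card S2 > nat p" using c1 c2 cH by simp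
  moreover have "finite S1" "finite S2" unfolding S1_def S2_def H_def by auto
  moreover have "card S1 + card S2 = card (S1 \<union> S2) + card (S1 \<inter> S2)"
    using card_Un_Int[of S1 S2] \<open>finite S1\<close> \<open>finite S2\<close> by blast
  ultimately have "card (S1 \<inter> S2) > 0" by linarith
  then have "S1 \<inter> S2 \<noteq> {}" by auto
  then obtain x y where "(A * x^2) mod p = (c - B * y^2) mod p"
    unfolding S1_def S2_def by auto
  then have "p dvd A * x^2 - (c - B * y^2)" using mod_eq_dvd_iff by blast
  moreover have "A * x^2 - (c - B * y^2) = A * x^2 + B * y^2 - c" by simp
  ultimately show ?thesis by metis
qed

definition zeq :: "rat \<Rightarrow> rat \<Rightarrow> bool" where
  "zeq a b \<longleftrightarrow> a - b \<in> \<int>"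

lemma zeq_refl[simp]: "zeq a a" by (simp add: zeq_def)
lemma zeq_sym: "zeq a b \<Longrightarrow> zeq b a"
  unfolding zeq_def by (metis Ints_minus minus_diff_eq)
lemma zeq_trans: "zeq a b \<Longrightarrow> zeq b c \<Longrightarrow> zeq a c"
  unfolding zeq_def by (metis Ints_add diff_add_cancel add_diff_eq)
lemma zeq_add: "zeq a b \<Longrightarrow> zeq c d \<Longrightarrow> zeq (a + c) (b + d)"
  unfolding zeq_def proof -
  assume "a - b \<in> \<int>" "c - d \<in> \<int>"
  then have "(a - b) + (c - d) \<in> \<int>" by (rule Ints_add)
  then show "a + c - (b + d) \<in> \<int>" by (simp add: algebra_simps)
qed
lemma zeq_neg: "zeq a b \<Longrightarrow> zeq (- a) (- b)"
  unfolding zeq_def by (metis Ints_minus minus_diff_eq minus_diff_minus)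
lemma zeq_diff: "zeq a b \<Longrightarrow> zeq c d \<Longrightarrow> zeq (a - c) (b - d)"
  using zeq_add[of a b "-c" "-d"] zeq_neg by simp
lemma zeq_mult_int: "zeq a b \<Longrightarrow> k \<in> \<int> \<Longrightarrow> zeq (k * a) (k * b)"
  unfolding zeq_def proof -
  assume "a - b \<in> \<int>" "k \<in> \<int>"
  then have "k * (a - b) \<in> \<int>" by (rule Ints_mult[rotated])
  then show "k * a - k * b \<in> \<int>" by (simp add: algebra_simps)
qed
lemma zeq_Ints: "zeq a 0 \<longleftrightarrow> a \<in> \<int>" by (simp add: zeq_def)
lemma zeq_Ints_iff: "zeq a b \<Longrightarrow> a \<in> \<int> \<longleftrightarrow> b \<in> \<int>"
  unfolding zeq_def proof -
  assume h: "a - b \<in> \<int>"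
  have "a = (a - b) + b" "b = a - (a - b)" by simp_all
  then show "a \<in> \<int> \<longleftrightarrow> b \<in> \<int>" using h by (metis Ints_add Ints_diff)
qed
lemma zeq_int_add: "k \<in> \<int> \<Longrightarrow> zeq (a + k) a"
  by (simp add: zeq_def)

lemma int_div_Ints_iff:
  assumes "p > 0"
  shows "(of_int a / of_nat p :: rat) \<in> \<int> \<longleftrightarrow> int p dvd a"
proof
  assume "of_int a / of_nat p \<in> (\<int> :: rat set)"
  then obtain m where m: "of_int a / of_nat p = (of_int m :: rat)" by (auto elim: Ints_cases)
  then have "(of_int a :: rat) = of_int m * of_nat p" using assms by (simp add: field_simps)
  then have "a = m * int p" by (metis of_int_eq_iff of_int_mult of_int_of_nat_eq)
  then show "int p dvd a" by simp
next
  assume "int p dvd a"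
  then obtain m where "a = int p * m" by auto
  then have "(of_int a / of_nat p :: rat) = of_int m" using assms by simp
  then show "(of_int a / of_nat p :: rat) \<in> \<int>" by simp
qed

locale qf = comm_group G for G (structure) +
  fixes lam :: "'a \<Rightarrow> 'a \<Rightarrow> rat"
  assumes symm: "x \<in> carrier G \<Longrightarrow> y \<in> carrier G \<Longrightarrow> zeq (lam x y) (lam y x)"
    and bil: "x \<in> carrier G \<Longrightarrow> y \<in> carrier G \<Longrightarrow> z \<in> carrier G \<Longrightarrow>
         zeq (lam (x \<otimes> y) z) (lam x z + lam y z)"
begin

lemma lam_one_l: "x \<in> carrier G \<Longrightarrow> zeq (lam \<one> x) 0"
proof -
  assume x: "x \<in> carrier G"
  have "zeq (lam (\<one> \<otimes> \<one>) x) (lam \<one> x + lam \<one> x)" using bil[of \<one> \<one> x] x by simp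
  then have "zeq (lam \<one> x) (lam \<one> x + lam \<one> x)" by simp
  then have "zeq (lam \<one> x - lam \<one> x) (lam \<one> x + lam \<one> x - lam \<one> x)"
    using zeq_diff zeq_refl by blast
  then show ?thesis by (simp add: zeq_sym)
qed

lemma lam_one_r: "x \<in> carrier G \<Longrightarrow> zeq (lam x \<one>) 0"
  using lam_one_l symm zeq_trans by blast

lemma bil_r: "x \<in> carrier G \<Longrightarrow> y \<in> carrier G \<Longrightarrow> z \<in> carrier G \<Longrightarrow>
         zeq (lam z (x \<otimes> y)) (lam z x + lam z y)"
proof -
  assume xyz: "x \<in> carrier G" "y \<in> carrier G" "z \<in> carrier G"
  have "zeq (lam z (x \<otimes> y)) (lam (x \<otimes> y) z)" using symm xyz by simp
  moreover have "zeq (lam (x \<otimes> y) z) (lam x z + lam y z)" using bil xyz by simp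
  moreover have "zeq (lam x z + lam y z) (lam z x + lam z y)" using symm xyz zeq_add by simp
  ultimately show ?thesis using zeq_trans by blast
qed

lemma lam_inv_l: "x \<in> carrier G \<Longrightarrow> z \<in> carrier G \<Longrightarrow> zeq (lam (inv x) z) (- lam x z)"
proof -
  assume xz: "x \<in> carrier G" "z \<in> carrier G"
  have "zeq (lam (inv x \<otimes> x) z) (lam (inv x) z + lam x z)" using bil[of "inv x" x z] xz by simp
  then have "zeq 0 (lam (inv x) z + lam x z)" using lam_one_l xz
    by (metis l_inv zeq_sym zeq_trans)
  then have "zeq (0 - lam x z) (lam (inv x) z + lam x z - lam x z)" using zeq_diff zeq_refl by blast
  then show ?thesis by (simp add: zeq_sym)
qed

lemma lam_pow_l: "x \<in> carrier G \<Longrightarrow> z \<in> carrier G \<Longrightarrow> zeq (lam (x [^] (n::nat)) z) (of_nat n * lam x z)"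
proof (induction n)
  case 0
  then show ?case using lam_one_l by simp
next
  case (Suc n)
  have "zeq (lam (x [^] n \<otimes> x) z) (lam (x [^] n) z + lam x z)" using bil Suc by simp
  moreover have "zeq (lam (x [^] n) z + lam x z) (of_nat n * lam x z + lam x z)"
    using Suc zeq_add by simp
  ultimately show ?case by (simp add: algebra_simps zeq_trans)
qed

lemma lam_ipow_l: "x \<in> carrier G \<Longrightarrow> z \<in> carrier G \<Longrightarrow> zeq (lam (x [^] (n::int)) z) (of_int n * lam x z)"
proof (cases "n \<ge> 0")
  case True
  assume xz: "x \<in> carrier G" "z \<in> carrier G"
  then show ?thesis using True lam_pow_l[OF xz, of "nat n"]
    by (metis int_nat_eq int_pow_int of_int_of_nat_eq)
next
  case False
  assume xz: "x \<in> carrier G" "z \<in> carrier G"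
  have "x [^] n = inv (x [^] (nat (- n)))" using False xz
    by (metis int_pow_int int_pow_neg nat_0_le neg_0_le_iff_le nle_le minus_minus)
  moreover have "zeq (lam (inv (x [^] (nat (- n)))) z) (- lam (x [^] (nat (- n))) z)"
    using lam_inv_l xz by simp
  moreover have "zeq (- lam (x [^] (nat (- n))) z) (- (of_nat (nat (-n)) * lam x z))"
    using lam_pow_l xz zeq_neg by blast
  moreover have "- (of_nat (nat (-n)) * lam x z) = of_int n * lam x z" using False by simp
  ultimately show ?thesis using zeq_trans by metis
qed

lemma lam_ipow_r: "x \<in> carrier G \<Longrightarrow> z \<in> carrier G \<Longrightarrow> zeq (lam z (x [^] (n::int))) (of_int n * lam z x)"
proof -
  assume xz: "x \<in> carrier G" "z \<in> carrier G"
  have "zeq (lam z (x [^] n)) (lam (x [^] n) z)" using symm xz by simp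
  moreover have "zeq (lam (x [^] n) z) (of_int n * lam x z)" using lam_ipow_l xz by simp
  moreover have "zeq (of_int n * lam x z) (of_int n * lam z x)" using symm xz zeq_mult_int by simp
  ultimately show ?thesis using zeq_trans by blast
qed

lemma lam_pow_r: "x \<in> carrier G \<Longrightarrow> z \<in> carrier G \<Longrightarrow> zeq (lam z (x [^] (n::nat))) (of_nat n * lam z x)"
  using lam_ipow_r[of x z "int n"] by (simp add: int_pow_int)

lemma lam_ord: "x \<in> carrier G \<Longrightarrow> z \<in> carrier G \<Longrightarrow> x [^] (n::nat) = \<one> \<Longrightarrow> of_nat n * lam x z \<in> \<int>"
  using lam_pow_l lam_one_l by (metis zeq_Ints zeq_sym zeq_trans)

lemma lam_ord_r: "x \<in> carrier G \<Longrightarrow> z \<in> carrier G \<Longrightarrow> x [^] (n::nat) = \<one> \<Longrightarrow> of_nat n * lam z x \<in> \<int>"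
  using lam_pow_r lam_one_r by (metis zeq_Ints zeq_sym zeq_trans)

lemma lam_sq: "x \<in> carrier G \<Longrightarrow> y \<in> carrier G \<Longrightarrow>
   zeq (lam (x \<otimes> y) (x \<otimes> y)) (lam x x + 2 * lam x y + lam y y)"
proof -
  assume xy: "x \<in> carrier G" "y \<in> carrier G"
  have 1: "zeq (lam (x \<otimes> y) (x \<otimes> y)) (lam x (x \<otimes> y) + lam y (x \<otimes> y))" using bil xy by simp
  have 2: "zeq (lam x (x \<otimes> y) + lam y (x \<otimes> y)) ((lam x x + lam x y) + (lam y x + lam y y))"
    by (rule zeq_add[OF bil_r[OF xy xy(1)] bil_r[OF xy xy(2)]])
  have 3: "zeq ((lam x x + lam x y) + (lam y x + lam y y)) ((lam x x + lam x y) + (lam x y + lam y y))"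
    by (rule zeq_add[OF zeq_refl zeq_add[OF symm[OF xy(2) xy(1)] zeq_refl]])
  have 4: "(lam x x + lam x y) + (lam x y + lam y y) = lam x x + 2 * lam x y + lam y y" by simp
  show ?thesis using zeq_trans[OF zeq_trans[OF 1 2] 3] unfolding 4 .
qed

end

lemma zeq_eq_trans: "zeq a b \<Longrightarrow> b = c \<Longrightarrow> zeq a c" by simp

lemma zeqE: "zeq a b \<Longrightarrow> (\<And>k. a = b + of_int k \<Longrightarrow> P) \<Longrightarrow> P"
  unfolding zeq_def by (metis Ints_cases add_diff_cancel_left' diff_add_cancel add.commute)

lemma zeqI: "a = b + of_int k \<Longrightarrow> zeq a b"
  unfolding zeq_def by simp

context qf
begin

lemma lam_ipow2: "x \<in> carrier G \<Longrightarrow> y \<in> carrier G \<Longrightarrow>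
  zeq (lam (x [^] (a::int)) (y [^] (b::int))) (of_int a * of_int b * lam x y)"
proof -
  assume xy: "x \<in> carrier G" "y \<in> carrier G"
  have yb: "y [^] b \<in> carrier G" using xy by simp
  have 1: "zeq (lam (x [^] a) (y [^] b)) (of_int a * lam x (y [^] b))"
    by (rule lam_ipow_l[OF xy(1) yb])
  have 2: "zeq (of_int a * lam x (y [^] b)) (of_int a * (of_int b * lam x y))"
    by (rule zeq_mult_int[OF lam_ipow_r[OF xy(2,1)]]) simp
  show ?thesis using zeq_trans[OF 1 2] by (simp add: mult.assoc)
qed

lemma lam_lin2: "u \<in> carrier G \<Longrightarrow> v \<in> carrier G \<Longrightarrow> w \<in> carrier G \<Longrightarrow>
  zeq (lam (u [^] (a::int) \<otimes> v [^] (b::int)) w) (of_int a * lam u w + of_int b * lam v w)"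
proof -
  assume uvw: "u \<in> carrier G" "v \<in> carrier G" "w \<in> carrier G"
  have 1: "zeq (lam (u [^] a \<otimes> v [^] b) w) (lam (u [^] a) w + lam (v [^] b) w)"
    by (rule bil) (use uvw in simp_all)
  have 2: "zeq (lam (u [^] a) w + lam (v [^] b) w) (of_int a * lam u w + of_int b * lam v w)"
    by (rule zeq_add[OF lam_ipow_l[OF uvw(1,3)] lam_ipow_l[OF uvw(2,3)]])
  show ?thesis using zeq_trans[OF 1 2] .
qed

lemma lam_lin2_r: "u \<in> carrier G \<Longrightarrow> v \<in> carrier G \<Longrightarrow> w \<in> carrier G \<Longrightarrow>
  zeq (lam w (u [^] (a::int) \<otimes> v [^] (b::int))) (of_int a * lam w u + of_int b * lam w v)"
proof -
  assume uvw: "u \<in> carrier G" "v \<in> carrier G" "w \<in> carrier G"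
  have 1: "zeq (lam w (u [^] a \<otimes> v [^] b)) (lam w (u [^] a) + lam w (v [^] b))"
    by (rule bil_r) (use uvw in simp_all)
  have 2: "zeq (lam w (u [^] a) + lam w (v [^] b)) (of_int a * lam w u + of_int b * lam w v)"
    by (rule zeq_add[OF lam_ipow_r[OF uvw(1,3)] lam_ipow_r[OF uvw(2,3)]])
  show ?thesis using zeq_trans[OF 1 2] .
qed

lemma lam_bil4:
  assumes uv: "u \<in> carrier G" "v \<in> carrier G"
    and xx: "xx = u [^] (a::int) \<otimes> v [^] (b::int)"
    and yy: "yy = u [^] (c::int) \<otimes> v [^] (d::int)"
  shows "zeq (lam xx yy)
      (of_int (a * c) * lam u u + of_int (b * d) * lam v v + of_int (a * d) * lam u v + of_int (b * c) * lam v u)"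
proof -
  have xxc: "xx \<in> carrier G" unfolding xx using uv by simp
  have 1: "zeq (lam xx yy) (of_int c * lam xx u + of_int d * lam xx v)"
    unfolding yy by (rule lam_lin2_r[OF uv xxc])
  have 2: "zeq (of_int c * lam xx u) (of_int c * (of_int a * lam u u + of_int b * lam v u))"
    unfolding xx by (rule zeq_mult_int[OF lam_lin2[OF uv uv(1)]]) simp
  have 3: "zeq (of_int d * lam xx v) (of_int d * (of_int a * lam u v + of_int b * lam v v))"
    unfolding xx by (rule zeq_mult_int[OF lam_lin2[OF uv uv(2)]]) simp
  have 4: "of_int c * (of_int a * lam u u + of_int b * lam v u) + of_int d * (of_int a * lam u v + of_int b * lam v v)
     = of_int (a * c) * lam u u + of_int (b * d) * lam v v + of_int (a * d) * lam u v + of_int (b * c) * lam v u"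
    by (simp add: algebra_simps)
  show ?thesis using zeq_trans[OF 1 zeq_add[OF 2 3]] unfolding 4 .
qed

lemma lam_orth4:
  assumes uv: "u \<in> carrier G" "v \<in> carrier G" and o: "lam u v \<in> \<int>"
    and xx: "xx = u [^] (a::int) \<otimes> v [^] (b::int)"
    and yy: "yy = u [^] (c::int) \<otimes> v [^] (d::int)"
  shows "zeq (lam xx yy) (of_int (a * c) * lam u u + of_int (b * d) * lam v v)"
proof -
  have o2: "lam v u \<in> \<int>" using zeq_Ints_iff[OF symm[OF uv]] o by simp
  have "of_int (a * d) * lam u v + of_int (b * c) * lam v u \<in> \<int>" using o o2 by simp
  then have "zeq (of_int (a * c) * lam u u + of_int (b * d) * lam v v + (of_int (a * d) * lam u v + of_int (b * c) * lam v u))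
      (of_int (a * c) * lam u u + of_int (b * d) * lam v v)"
    by (rule zeq_int_add)
  then have "zeq (of_int (a * c) * lam u u + of_int (b * d) * lam v v + of_int (a * d) * lam u v + of_int (b * c) * lam v u)
      (of_int (a * c) * lam u u + of_int (b * d) * lam v v)"
    by (simp add: add.assoc)
  then show ?thesis by (rule zeq_trans[OF lam_bil4[OF uv xx yy]])
qed

end

locale aqf = qf +
  assumes fin: "finite (carrier G)"
    and aniso: "x \<in> carrier G \<Longrightarrow> lam x x \<in> \<int> \<Longrightarrow> x = \<one>"
begin

lemma ord_pos: "x \<in> carrier G \<Longrightarrow> ord x > 0"
  using ord_ge_1[OF fin] by fastforce

lemma sq_pow_one: "x \<in> carrier G \<Longrightarrow> x [^] (m * m :: nat) = \<one> \<Longrightarrow> x [^] m = \<one>"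
proof -
  assume x: "x \<in> carrier G" and m: "x [^] (m * m :: nat) = \<one>"
  have 1: "zeq (lam (x [^] int m) (x [^] int m)) (of_int (int m) * of_int (int m) * lam x x)"
    using lam_ipow2 x by blast
  have "of_nat (m * m) * lam x x \<in> \<int>" using lam_ord[OF x x m] .
  then have "of_int (int m) * of_int (int m) * lam x x \<in> \<int>" by simp
  then have "lam (x [^] int m) (x [^] int m) \<in> \<int>" using zeq_Ints_iff[OF 1] by simp
  then have "x [^] int m = \<one>" using aniso x by simp
  then show ?thesis by (simp add: int_pow_int)
qed

lemma ord_squarefree: "x \<in> carrier G \<Longrightarrow> squarefree (ord x)"
proof (rule squarefreeI)
  fix d assume x: "x \<in> carrier G" and d: "d ^ 2 dvd ord x"
  obtain k where k: "ord x = d * d * k" using d unfolding power2_eq_square dvd_def by blast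
  have pos: "ord x > 0" using ord_pos x by simp
  then have kd: "k > 0" "d > 0" using k by auto
  have kk: "x [^] (k * (d * d)) = \<one>"
  proof -
    have "k * (d * d) = ord x" using k by (simp only: mult.commute)
    then show ?thesis using pow_ord_eq_1[OF x] by simp
  qed
  have "(x [^] k) [^] (d * d) = \<one>" using nat_pow_pow[OF x, of k "d * d"] kk by simp
  then have "(x [^] k) [^] d = \<one>" using sq_pow_one[of "x [^] k" d] x by blast
  then have "x [^] (k * d) = \<one>" using nat_pow_pow[OF x, of k d] by simp
  then have "ord x dvd k * d" using pow_eq_id x by blast
  then have "ord x \<le> k * d" using kd by (simp add: dvd_imp_le)
  then have "d * (d * k) \<le> 1 * (d * k)" using k by (simp add: mult.commute mult.left_commute)
  then have "d \<le> 1" using kd mult_le_cancel2[of d "d*k" 1] by simp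
  then show "d dvd 1" using kd by simp
qed

end

lemma (in comm_group) ord_mult_coprime:
  assumes a: "a \<in> carrier G" and y: "y \<in> carrier G" and c: "coprime (ord a) (ord y)"
  shows "ord (a \<otimes> y) = ord a * ord y"
proof -
  have "(a \<otimes> y) [^] n = \<one> \<longleftrightarrow> ord a * ord y dvd n" for n :: nat
  proof
    assume h: "(a \<otimes> y) [^] n = \<one>"
    have e1: "a [^] n \<otimes> y [^] n = \<one>" using h a y by (simp add: nat_pow_distrib)
    have "(a [^] n \<otimes> y [^] n) [^] ord y = \<one>" using e1 by simp
    then have "a [^] (n * ord y) \<otimes> y [^] (ord y * n) = \<one>" using a y
      by (simp add: nat_pow_distrib nat_pow_pow mult.commute)
    then have "a [^] (n * ord y) = \<one>" using a y by (simp add: nat_pow_pow[symmetric])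
    then have "ord a dvd n * ord y" using pow_eq_id a by blast
    then have 1: "ord a dvd n" using c by (simp add: coprime_dvd_mult_left_iff)
    have "(a [^] n \<otimes> y [^] n) [^] ord a = \<one>" using e1 by simp
    then have "a [^] (ord a * n) \<otimes> y [^] (n * ord a) = \<one>" using a y
      by (simp add: nat_pow_distrib nat_pow_pow mult.commute)
    then have "y [^] (n * ord a) = \<one>" using a y by (simp add: nat_pow_pow[symmetric])
    then have "ord y dvd n * ord a" using pow_eq_id y by blast
    then have 2: "ord y dvd n" using c by (simp add: coprime_dvd_mult_left_iff coprime_commute)
    show "ord a * ord y dvd n" using 1 2 c by (simp add: divides_mult)
  next
    assume "ord a * ord y dvd n"
    then obtain k where k: "n = ord a * ord y * k" by auto
    have "a [^] n = (a [^] ord a) [^] (ord y * k)" unfolding nat_pow_pow[OF a] k by (simp add: mult.assoc)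
    then have 1: "a [^] n = \<one>" using a by simp
    have "y [^] n = (y [^] ord y) [^] (ord a * k)" unfolding nat_pow_pow[OF y] k by (simp add: mult.commute mult.left_commute)
    then have 2: "y [^] n = \<one>" using y by simp
    show "(a \<otimes> y) [^] n = \<one>" using a y 1 2 by (simp add: nat_pow_distrib)
  qed
  then show ?thesis using ord_unique a y by blast
qed

context aqf
begin

lemma maxdiv:
  assumes S: "S \<subseteq> carrier G" "\<And>x k. x \<in> S \<Longrightarrow> x [^] (k::nat) \<in> S"
     "\<And>x y. x \<in> S \<Longrightarrow> y \<in> S \<Longrightarrow> x \<otimes> y \<in> S"
    and a: "a \<in> S" "\<And>x. x \<in> S \<Longrightarrow> ord x \<le> ord a" and x: "x \<in> S"
  shows "ord x dvd ord a"
proof -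
  have xc: "x \<in> carrier G" "a \<in> carrier G" using S a x by auto
  define g where "g = gcd (ord x) (ord a)"
  have gpos: "g > 0" using ord_pos xc unfolding g_def by simp
  define d where "d = ord x div g"
  have dg: "ord x = d * g" unfolding d_def g_def by simp
  have ordy: "ord (x [^] g) = d" using ord_pow_gen[OF xc(1), of g] gpos unfolding d_def g_def by simp
  have cop: "coprime d (ord a)"
  proof (rule ccontr)
    assume "\<not> coprime d (ord a)"
    then obtain c where c: "c dvd d" "c dvd ord a" "\<not> is_unit c" by (rule not_coprimeE)
    then have "c \<noteq> 1" by auto
    then obtain p where p: "Factorial_Ring.prime p" "p dvd c" using prime_factor_nat by blast
    have pd: "p dvd d" using dvd_trans[OF p(2) c(1)] .
    have pa: "p dvd ord a" using dvd_trans[OF p(2) c(2)] .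
    have px: "p dvd ord x" unfolding dg by (rule dvd_mult2[OF pd])
    have "p dvd g" unfolding g_def by (rule gcd_greatest[OF px pa])
    moreover note pd
    ultimately have "p * p dvd ord x" using dg by (simp add: mult_dvd_mono)
    then have "p ^ 2 dvd ord x" by (simp add: power2_eq_square)
    then have "is_unit p" using ord_squarefree[OF xc(1)] unfolding squarefree_def by blast
    then show False using p(1) by simp
  qed
  have "ord (a \<otimes> x [^] g) = ord a * d"
    using ord_mult_coprime[OF xc(2) nat_pow_closed[OF xc(1)]] cop ordy by (simp add: coprime_commute)
  moreover have "a \<otimes> x [^] g \<in> S" using S a x by simp
  moreover have "ord (a \<otimes> x [^] g) \<le> ord a" using a(2) calculation(2) by blast
  ultimately have "ord a * d \<le> ord a * 1" by simp
  then have "d \<le> 1" using ord_pos[OF xc(2)] by simp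
  moreover have "d > 0" using dg ord_pos[OF xc(1)] by (cases d) auto
  ultimately have "d = 1" by simp
  then have "ord x = g" using dg by simp
  then show ?thesis using gcd_dvd2[of "ord x" "ord a"] unfolding g_def by simp
qed

lemma alpha_exists:
  assumes g: "g \<in> carrier G" "g [^] (p::nat) = \<one>" "g \<noteq> \<one>" and p: "p > 0"
  shows "\<exists>\<alpha>. lam g g = of_int \<alpha> / of_nat p \<and> \<not> int p dvd \<alpha>"
proof -
  have "of_nat p * lam g g \<in> \<int>" using lam_ord[OF g(1) g(1) g(2)] .
  then obtain \<alpha> where al: "of_nat p * lam g g = of_int \<alpha>" by (auto elim: Ints_cases)
  then have e: "lam g g = of_int \<alpha> / of_nat p" using p by (simp add: field_simps)
  moreover have "\<not> int p dvd \<alpha>"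
  proof
    assume "int p dvd \<alpha>"
    then have "lam g g \<in> \<int>" using e int_div_Ints_iff[OF p] by simp
    then show False using aniso[OF g(1)] g(3) by blast
  qed
  ultimately show ?thesis by blast
qed

lemma split_orth:
  assumes u: "u \<in> carrier G" and x: "x \<in> carrier G"
  shows "\<exists>i::int. lam u (x \<otimes> u [^] i) \<in> \<int>"
proof -
  define N where "N = ord u"
  have Npos: "N > 0" using ord_pos u N_def by simp
  have uN: "u [^] N = \<one>" using u N_def by simp
  obtain \<alpha> where al: "of_nat N * lam u u = of_int \<alpha>"
    using lam_ord[OF u u uN] by (auto elim: Ints_cases)
  obtain \<kappa> where ka: "of_nat N * lam u x = of_int \<kappa>"
    using lam_ord[OF u x uN] by (auto elim: Ints_cases)
  have luu: "lam u u = of_int \<alpha> / of_nat N" using al Npos by (simp add: field_simps)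
  have lux: "lam u x = of_int \<kappa> / of_nat N" using ka Npos by (simp add: field_simps)
  have cop: "coprime \<alpha> (int N)"
  proof (rule ccontr)
    assume "\<not> coprime \<alpha> (int N)"
    then obtain c where c: "c dvd \<alpha>" "c dvd int N" "\<not> is_unit c" by (rule not_coprimeE)
    have "c \<noteq> 0" using c(2) Npos by auto
    then obtain p0 where p0: "p0 dvd c" "Factorial_Ring.prime p0" using prime_divisor_exists c(3) by blast
    define q where "q = nat p0"
    have q: "Factorial_Ring.prime q" "int q = p0" using p0(2) unfolding q_def
      using prime_ge_2_int[OF p0(2)] by simp_all
    have qa: "int q dvd \<alpha>" "int q dvd int N" using q p0 c by (auto intro: dvd_trans)
    then have "q dvd N" by simp
    then obtain m where m: "N = q * m" by blast
    have q1: "q > 1" using q prime_gt_1_nat by blast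
    have mpos: "m > 0" using m Npos by (cases m) auto
    have mlt: "m < N" using m q1 mpos by simp
    obtain \<alpha>' where a': "\<alpha> = int q * \<alpha>'" using qa by blast
    have z1: "zeq (lam (u [^] int m) (u [^] int m)) (of_int (int m) * of_int (int m) * lam u u)"
      using lam_ipow2 u by blast
    have e1: "of_int (int m) * of_int (int m) * lam u u = (of_int (int m * \<alpha>') :: rat)"
      unfolding luu a' m using q1 mpos by (simp add: field_simps)
    have zz: "zeq (lam (u [^] int m) (u [^] int m)) (of_int (int m * \<alpha>'))"
      by (rule zeq_eq_trans[OF z1 e1])
    have "(of_int (int m * \<alpha>') :: rat) \<in> \<int>" by simp
    then have "lam (u [^] int m) (u [^] int m) \<in> \<int>" using zeq_Ints_iff[OF zz] by simp
    then have "u [^] int m = \<one>" using aniso[of "u [^] int m"] u by simp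
    then have "u [^] m = \<one>" by (simp add: int_pow_int)
    then have "N dvd m" using pow_eq_id u N_def by blast
    then have "N \<le> m" using mpos dvd_imp_le by blast
    then show False using mlt by linarith
  qed
  obtain y where y: "[\<alpha> * y = 1] (mod int N)" using cong_solve_coprime_int[OF cop] by blast
  define i where "i = - \<kappa> * y"
  have z: "zeq (lam u (x \<otimes> u [^] i)) (lam u x + lam u (u [^] i))"
    by (rule bil_r) (use u x in simp_all)
  have z2: "zeq (lam u x + lam u (u [^] i)) (lam u x + of_int i * lam u u)"
    by (rule zeq_add[OF zeq_refl lam_ipow_r[OF u u]])
  have "int N dvd \<alpha> * y - 1" using y unfolding cong_iff_dvd_diff .
  then have "int N dvd 1 - \<alpha> * y" using dvd_diff_commute by blast
  then have "int N dvd \<kappa> * (1 - \<alpha> * y)" by (rule dvd_mult)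
  moreover have "\<kappa> * (1 - \<alpha> * y) = \<kappa> + i * \<alpha>" unfolding i_def by (simp add: algebra_simps)
  ultimately have "int N dvd \<kappa> + i * \<alpha>" by simp
  then have "(of_int (\<kappa> + i * \<alpha>) / of_nat N :: rat) \<in> \<int>" using int_div_Ints_iff[OF Npos] by blast
  moreover have "lam u x + of_int i * lam u u = of_int (\<kappa> + i * \<alpha>) / of_nat N"
    unfolding lux luu using Npos by (simp add: field_simps)
  ultimately have "lam u x + of_int i * lam u u \<in> \<int>" by simp
  then have "lam u (x \<otimes> u [^] i) \<in> \<int>" using zeq_Ints_iff[OF zeq_trans[OF z z2]] by simp
  then show ?thesis by blast
qed

lemma three:
  assumes p: "Factorial_Ring.prime (p::nat)" "odd p"
    and g: "g1 \<in> carrier G" "g2 \<in> carrier G" "g3 \<in> carrier G"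
    and pw: "g1 [^] p = \<one>" "g2 [^] p = \<one>" "g3 [^] p = \<one>"
    and ne: "g1 \<noteq> \<one>" "g2 \<noteq> \<one>" "g3 \<noteq> \<one>"
    and o: "lam g1 g2 \<in> \<int>" "lam g1 g3 \<in> \<int>" "lam g2 g3 \<in> \<int>"
  shows False
proof -
  have ppos: "p > 0" using p prime_gt_0_nat by blast
  obtain a1 where a1: "lam g1 g1 = of_int a1 / of_nat p" "\<not> int p dvd a1"
    using alpha_exists[OF g(1) pw(1) ne(1) ppos] by blast
  obtain a2 where a2: "lam g2 g2 = of_int a2 / of_nat p" "\<not> int p dvd a2"
    using alpha_exists[OF g(2) pw(2) ne(2) ppos] by blast
  obtain a3 where a3: "lam g3 g3 = of_int a3 / of_nat p" "\<not> int p dvd a3"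
    using alpha_exists[OF g(3) pw(3) ne(3) ppos] by blast
  have pint: "Factorial_Ring.prime (int p)" "odd (int p)" using p by auto
  obtain x y where xy: "int p dvd a1 * x^2 + a2 * y^2 - (- a3)"
    using two_squares_represent[OF pint(1) a1(2) a2(2) pint(2)] by blast
  define w where "w = g1 [^] x \<otimes> g2 [^] y"
  have wc: "w \<in> carrier G" unfolding w_def using g by simp
  have zw: "zeq (lam w w) (of_int (x * x) * lam g1 g1 + of_int (y * y) * lam g2 g2)"
    by (rule lam_orth4[OF g(1,2) o(1) w_def w_def])
  have zw3: "zeq (lam w g3) (of_int x * lam g1 g3 + of_int y * lam g2 g3)"
    unfolding w_def by (rule lam_lin2[OF g])
  have "of_int x * lam g1 g3 + of_int y * lam g2 g3 \<in> \<int>" using o by simp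
  then have w3: "lam w g3 \<in> \<int>" using zeq_Ints_iff[OF zw3] by simp
  have zs: "zeq (lam (w \<otimes> g3) (w \<otimes> g3)) (lam w w + 2 * lam w g3 + lam g3 g3)"
    by (rule lam_sq[OF wc g(3)])
  obtain k1 where k1: "lam w w = of_int (x * x) * lam g1 g1 + of_int (y * y) * lam g2 g2 + of_int k1"
    using zw by (rule zeqE)
  obtain k2 where k2: "lam w g3 = of_int k2" using w3 by (auto elim: Ints_cases)
  obtain k3 where k3: "lam (w \<otimes> g3) (w \<otimes> g3) = lam w w + 2 * lam w g3 + lam g3 g3 + of_int k3"
    using zs by (rule zeqE)
  have "lam (w \<otimes> g3) (w \<otimes> g3) = of_int (a1 * x^2 + a2 * y^2 - (- a3)) / of_nat p + of_int (k1 + 2 * k2 + k3)"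
    unfolding k3 k1 k2 a1(1) a2(1) a3(1) using ppos by (simp add: field_simps power2_eq_square)
  moreover have "(of_int (a1 * x^2 + a2 * y^2 - (- a3)) / of_nat p :: rat) \<in> \<int>"
    using int_div_Ints_iff[OF ppos] xy by blast
  ultimately have "lam (w \<otimes> g3) (w \<otimes> g3) \<in> \<int>" by simp
  then have e: "w \<otimes> g3 = \<one>" using aniso[of "w \<otimes> g3"] wc g(3) by simp
  have "zeq (lam (w \<otimes> g3) g3) (lam w g3 + lam g3 g3)" by (rule bil[OF wc g(3) g(3)])
  moreover have "zeq (lam (w \<otimes> g3) g3) 0" unfolding e by (rule lam_one_l[OF g(3)])
  ultimately have "zeq (lam w g3 + lam g3 g3) 0" using zeq_trans zeq_sym by blast
  then have "lam w g3 + lam g3 g3 \<in> \<int>" by (simp add: zeq_Ints)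
  then have "lam g3 g3 \<in> \<int>" using w3 by (metis Ints_diff add_diff_cancel_left')
  then show False using aniso[OF g(3)] ne(3) by blast
qed

lemma lam_pow2: "x \<in> carrier G \<Longrightarrow> y \<in> carrier G \<Longrightarrow>
  zeq (lam (x [^] (m::nat)) (y [^] (n::nat))) (of_nat m * of_nat n * lam x y)"
  using lam_ipow2[of x y "int m" "int n"] by (simp add: int_pow_int)

lemma ord_pow_div:
  assumes x: "x \<in> carrier G" and p: "p dvd ord x" "p > 0"
  shows "ord (x [^] (ord x div p)) = p"
proof -
  obtain k where k: "ord x = p * k" using p(1) by blast
  have kpos: "k > 0" using k ord_pos[OF x] by (cases k) auto
  have kd: "ord x div p = k" using k p(2) by simp
  have "ord (x [^] k) = ord x div k" by (rule ord_pow[OF x]) (use k kpos in auto)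
  then show ?thesis unfolding kd using k kpos by simp
qed

lemma decomp_struct:
  assumes oddp: "\<And>p. Factorial_Ring.prime p \<Longrightarrow> p dvd order G \<Longrightarrow> odd p"
  obtains a b where "a \<in> carrier G" "b \<in> carrier G" "ord b dvd ord a" "lam a b \<in> \<int>"
    "\<And>x. x \<in> carrier G \<Longrightarrow> \<exists>(i::int) (j::int). x = a [^] i \<otimes> b [^] j"
    "\<And>(i::int) (j::int). a [^] i = b [^] j \<Longrightarrow> a [^] i = \<one>"
proof -
  have fo: "finite (ord ` carrier G)" "ord ` carrier G \<noteq> {}" using fin by auto
  obtain a where a: "a \<in> carrier G" "ord a = Max (ord ` carrier G)"
    using Max_in[OF fo] by auto
  have amax: "ord x \<le> ord a" if "x \<in> carrier G" for x using a that fo by simp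
  have F1: "ord x dvd ord a" if "x \<in> carrier G" for x
    by (rule maxdiv[of "carrier G"]) (use a amax that in auto)
  define B where "B = {x \<in> carrier G. lam a x \<in> \<int>}"
  have Bc: "B \<subseteq> carrier G" unfolding B_def by blast
  have Bmul: "x \<otimes> y \<in> B" if "x \<in> B" "y \<in> B" for x y
  proof -
    have xy: "x \<in> carrier G" "y \<in> carrier G" "lam a x \<in> \<int>" "lam a y \<in> \<int>" using that B_def by auto
    have "zeq (lam a (x \<otimes> y)) (lam a x + lam a y)" by (rule bil_r[OF xy(1,2) a(1)])
    moreover have "lam a x + lam a y \<in> \<int>" using xy by simp
    ultimately show ?thesis using zeq_Ints_iff xy unfolding B_def by blast
  qed
  have Bipow: "x [^] (k::int) \<in> B" if "x \<in> B" for x k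
  proof -
    have xy: "x \<in> carrier G" "lam a x \<in> \<int>" using that B_def by auto
    have "zeq (lam a (x [^] k)) (of_int k * lam a x)" by (rule lam_ipow_r[OF xy(1) a(1)])
    moreover have "of_int k * lam a x \<in> \<int>" using xy by simp
    ultimately show ?thesis using zeq_Ints_iff xy unfolding B_def by auto
  qed
  have Bpow: "x [^] (k::nat) \<in> B" if "x \<in> B" for x k
    using Bipow[OF that, of "int k"] by (simp add: int_pow_int)
  have oneB: "\<one> \<in> B" unfolding B_def using lam_one_r[OF a(1)] zeq_Ints by simp
  have fB: "finite (ord ` B)" "ord ` B \<noteq> {}" using fin Bc oneB finite_subset by auto
  obtain b where b: "b \<in> B" "ord b = Max (ord ` B)"
    using Max_in[OF fB] by auto
  have bmax: "ord x \<le> ord b" if "x \<in> B" for x using b that fB by simp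
  have F2: "ord x dvd ord b" if "x \<in> B" for x
    by (rule maxdiv[of B]) (use b bmax that Bc Bpow Bmul in auto)
  have bc: "b \<in> carrier G" "lam a b \<in> \<int>" using b B_def by auto
  have F5: "a [^] i = \<one>" if "a [^] (i::int) \<in> B" for i
  proof -
    have "zeq (lam a (a [^] i)) (of_int i * lam a a)" by (rule lam_ipow_r[OF a(1) a(1)])
    moreover have "lam a (a [^] i) \<in> \<int>" using that B_def by auto
    ultimately have h: "of_int i * lam a a \<in> \<int>" using zeq_Ints_iff by blast
    have "zeq (lam (a [^] i) (a [^] i)) (of_int i * of_int i * lam a a)" by (rule lam_ipow2[OF a(1) a(1)])
    moreover have "of_int i * of_int i * lam a a \<in> \<int>" using h by (metis Ints_mult Ints_of_int mult.assoc)
    ultimately have "lam (a [^] i) (a [^] i) \<in> \<int>" using zeq_Ints_iff by blast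
    then show ?thesis using aniso[of "a [^] i"] a(1) by simp
  qed
  have Ctriv: "z = \<one>" if "z \<in> B" "lam b z \<in> \<int>" for z
  proof (rule ccontr)
    assume zn: "z \<noteq> \<one>"
    have zc: "z \<in> carrier G" using that Bc by auto
    have "ord z \<noteq> 1" using zn ord_eq_1[OF zc] by simp
    then obtain p where p: "Factorial_Ring.prime p" "p dvd ord z" using prime_factor_nat by blast
    have ppos: "p > 0" "p > 1" using p(1) prime_gt_0_nat prime_gt_1_nat by blast+
    define c where "c = z [^] (ord z div p)"
    have zpos: "ord z > 0" using ord_pos[OF zc] .
    have oc: "ord c = p" unfolding c_def by (rule ord_pow_div[OF zc p(2) ppos(1)])
    have cc: "c \<in> carrier G" unfolding c_def using zc by simp
    have cB: "c \<in> B" unfolding c_def using Bpow that(1) by blast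
    have cb: "lam b c \<in> \<int>"
    proof -
      have "zeq (lam b c) (of_nat (ord z div p) * lam b z)" unfolding c_def by (rule lam_pow_r[OF zc bc(1)])
      moreover have "of_nat (ord z div p) * lam b z \<in> \<int>" using that(2) by simp
      ultimately show ?thesis using zeq_Ints_iff by blast
    qed
    have pM: "p dvd ord b" using F2[OF cB] oc by simp
    have pN: "p dvd ord a" using F1[OF bc(1)] pM by (rule dvd_trans[rotated])
    define g1 where "g1 = a [^] (ord a div p)"
    define g2 where "g2 = b [^] (ord b div p)"
    have og: "ord g1 = p" "ord g2 = p" unfolding g1_def g2_def
      by (rule ord_pow_div[OF a(1) pN ppos(1)], rule ord_pow_div[OF bc(1) pM ppos(1)])
    have g1c: "g1 \<in> carrier G" "g2 \<in> carrier G" unfolding g1_def g2_def using a(1) bc(1) by auto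
    have pw: "g1 [^] p = \<one>" "g2 [^] p = \<one>" "c [^] p = \<one>"
      using og oc pow_ord_eq_1 g1c cc by metis+
    have ne: "g1 \<noteq> \<one>" "g2 \<noteq> \<one>" "c \<noteq> \<one>" using og oc ppos ord_eq_1 g1c cc by auto
    have o12: "lam g1 g2 \<in> \<int>"
    proof -
      have "zeq (lam g1 g2) (of_nat (ord a div p) * of_nat (ord b div p) * lam a b)"
        unfolding g1_def g2_def by (rule lam_pow2[OF a(1) bc(1)])
      moreover have "of_nat (ord a div p) * of_nat (ord b div p) * lam a b \<in> \<int>" using bc(2) by simp
      ultimately show ?thesis using zeq_Ints_iff by blast
    qed
    have o13: "lam g1 c \<in> \<int>"
    proof -
      have "zeq (lam g1 c) (of_nat (ord a div p) * lam a c)"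
        unfolding g1_def by (rule lam_pow_l[OF a(1) cc])
      moreover have "lam a c \<in> \<int>" using cB B_def by auto
      then have "of_nat (ord a div p) * lam a c \<in> \<int>" by simp
      ultimately show ?thesis using zeq_Ints_iff by blast
    qed
    have o23: "lam g2 c \<in> \<int>"
    proof -
      have "zeq (lam g2 c) (of_nat (ord b div p) * lam b c)"
        unfolding g2_def by (rule lam_pow_l[OF bc(1) cc])
      moreover have "of_nat (ord b div p) * lam b c \<in> \<int>" using cb by simp
      ultimately show ?thesis using zeq_Ints_iff by blast
    qed
    have "p dvd order G" using pN ord_dvd_group_order[OF a(1)] by (rule dvd_trans)
    then have "odd p" using oddp p(1) by blast
    then show False using three[OF p(1) _ g1c cc pw ne o12 o13 o23] by blast
  qed
  have decomp: "\<exists>(i::int) (j::int). x = a [^] i \<otimes> b [^] j" if x: "x \<in> carrier G" for x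
  proof -
    obtain i :: int where i: "lam a (x \<otimes> a [^] i) \<in> \<int>" using split_orth[OF a(1) x] by blast
    define y where "y = x \<otimes> a [^] i"
    have yB: "y \<in> B" unfolding B_def y_def using i x a(1) by simp
    have yc: "y \<in> carrier G" using yB Bc by auto
    obtain j :: int where j: "lam b (y \<otimes> b [^] j) \<in> \<int>" using split_orth[OF bc(1) yc] by blast
    have "y \<otimes> b [^] j \<in> B" using Bmul[OF yB Bipow[OF b(1)]] .
    then have e: "y \<otimes> b [^] j = \<one>" using Ctriv j by blast
    have "x \<otimes> (a [^] i \<otimes> b [^] j) = \<one>" using e unfolding y_def using x a(1) bc(1) by (simp add: m_assoc)
    then have "x = inv (a [^] i \<otimes> b [^] j)" using inv_equality[of x "a [^] i \<otimes> b [^] j"] x a(1) bc(1) by simp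
    also have "\<dots> = a [^] (-i) \<otimes> b [^] (-j)" using a(1) bc(1) by (simp add: inv_mult int_pow_neg)
    finally show ?thesis by blast
  qed
  have F5': "a [^] i = \<one>" if "a [^] (i::int) = b [^] (j::int)" for i j
  proof -
    have "a [^] i \<in> B" unfolding that by (rule Bipow[OF b(1)])
    then show ?thesis by (rule F5)
  qed
  show ?thesis
    apply (rule that[OF a(1) bc(1) F1[OF bc(1)] bc(2)])
    using decomp F5' by blast+
qed

end

lemma int_range_dvd_eq:
  fixes i i' :: int
  assumes "0 \<le> i" "i < n" "0 \<le> i'" "i' < n" "n dvd i - i'"
  shows "i = i'"
proof -
  have "i mod n = i' mod n" using assms(5) mod_eq_dvd_iff by blast
  then show ?thesis using assms by simp
qed

context comm_group
begin

lemma pow_mod_ord: "x \<in> carrier G \<Longrightarrow> x [^] (k mod int (ord x)) = x [^] (k::int)"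
proof -
  assume x: "x \<in> carrier G"
  have "int (ord x) dvd k - k mod int (ord x)" unfolding minus_mod_eq_mult_div by simp
  then show ?thesis using int_pow_eq[OF x] by simp
qed

lemma iso_from_decomp:
  assumes a: "a \<in> carrier G" and b: "b \<in> carrier G" and pos: "ord a > 0" "ord b > 0"
    and decomp: "\<And>x. x \<in> carrier G \<Longrightarrow> \<exists>(i::int) (j::int). x = a [^] i \<otimes> b [^] j"
    and F5: "\<And>(i::int) (j::int). a [^] i = b [^] j \<Longrightarrow> a [^] i = \<one>"
  shows "G \<cong> (integer_mod_group (ord a) \<times>\<times> integer_mod_group (ord b))"
proof -
  define N where "N = ord a"
  define M where "M = ord b"
  let ?P = "integer_mod_group N \<times>\<times> integer_mod_group M"
  define phi where "phi = (\<lambda>(i::int, j::int). a [^] i \<otimes> b [^] j)"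
  have car: "carrier ?P = {0..<int N} \<times> {0..<int M}"
    using pos unfolding N_def M_def by (simp add: carrier_integer_mod_group)
  have hom: "phi \<in> hom ?P G"
  proof (rule homI)
    fix x assume "x \<in> carrier ?P"
    then show "phi x \<in> carrier G" unfolding phi_def using a b by (auto split: prod.splits)
  next
    fix x y assume xy: "x \<in> carrier ?P" "y \<in> carrier ?P"
    obtain i j where x: "x = (i, j)" by (cases x)
    obtain i' j' where y: "y = (i', j')" by (cases y)
    have "x \<otimes>\<^bsub>?P\<^esub> y = ((i + i') mod int N, (j + j') mod int M)"
      unfolding x y by simp
    then have "phi (x \<otimes>\<^bsub>?P\<^esub> y) = a [^] ((i + i') mod int N) \<otimes> b [^] ((j + j') mod int M)"
      unfolding phi_def by simp
    also have "\<dots> = a [^] (i + i') \<otimes> b [^] (j + j')"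
      unfolding N_def M_def using pow_mod_ord a b by simp
    also have "\<dots> = (a [^] i \<otimes> b [^] j) \<otimes> (a [^] i' \<otimes> b [^] j')"
      using a b by (simp add: int_pow_mult m_ac)
    also have "\<dots> = phi x \<otimes> phi y" unfolding phi_def x y by simp
    finally show "phi (x \<otimes>\<^bsub>?P\<^esub> y) = phi x \<otimes> phi y" .
  qed
  have inj: "inj_on phi (carrier ?P)"
  proof (rule inj_onI)
    fix x y assume xy: "x \<in> carrier ?P" "y \<in> carrier ?P" and e: "phi x = phi y"
    obtain i j where x: "x = (i, j)" by (cases x)
    obtain i' j' where y: "y = (i', j')" by (cases y)
    have e2: "a [^] i \<otimes> b [^] j = a [^] i' \<otimes> b [^] j'" using e unfolding phi_def x y by simp
    have "a [^] (i - i') \<otimes> (a [^] i' \<otimes> b [^] j) = a [^] i \<otimes> b [^] j"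
      using a b by (simp add: int_pow_mult[symmetric] m_assoc[symmetric])
    also have "\<dots> = a [^] i' \<otimes> b [^] j'" by (rule e2)
    also have "\<dots> = b [^] (j' - j) \<otimes> (a [^] i' \<otimes> b [^] j)"
    proof -
      have "b [^] (j' - j) \<otimes> (a [^] i' \<otimes> b [^] j) = a [^] i' \<otimes> (b [^] (j' - j) \<otimes> b [^] j)"
        using a b by (simp add: m_ac)
      also have "\<dots> = a [^] i' \<otimes> b [^] j'" using b by (simp add: int_pow_mult[symmetric])
      finally show ?thesis by simp
    qed
    finally have "a [^] (i - i') = b [^] (j' - j)" using a b by simp
    moreover have ai: "a [^] (i - i') = \<one>" using F5 calculation by blast
    ultimately have bj: "b [^] (j' - j) = \<one>" by simp
    have "int N dvd i - i'" using ai int_pow_eq_id[OF a] unfolding N_def by simp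
    moreover have "int M dvd j' - j" using bj int_pow_eq_id[OF b] unfolding M_def by simp
    moreover have "(i, j) \<in> {0..<int N} \<times> {0..<int M}" using xy(1) unfolding x car .
    moreover have "(i', j') \<in> {0..<int N} \<times> {0..<int M}" using xy(2) unfolding y car .
    ultimately have "i = i'" "j' = j"
      using int_range_dvd_eq[of i "int N" i'] int_range_dvd_eq[of j' "int M" j] by auto
    then show "x = y" using x y by simp
  qed
  have surj: "phi ` carrier ?P = carrier G"
  proof
    show "phi ` carrier ?P \<subseteq> carrier G" using hom hom_carrier by blast
  next
    show "carrier G \<subseteq> phi ` carrier ?P"
    proof
      fix x assume x: "x \<in> carrier G"
      obtain i j :: int where ij: "x = a [^] i \<otimes> b [^] j" using decomp[OF x] by blast
      have "x = phi (i mod int N, j mod int M)" unfolding phi_def ij N_def M_def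
        using pow_mod_ord a b by simp
      moreover have "(i mod int N, j mod int M) \<in> carrier ?P" using car pos
        unfolding N_def M_def by simp
      ultimately show "x \<in> phi ` carrier ?P" by blast
    qed
  qed
  have "phi \<in> iso ?P G" using hom inj surj by (simp add: iso_def bij_betw_def)
  then have "?P \<cong> G" by (rule is_isoI)
  moreover have "group ?P" by (simp add: DirProd_group)
  ultimately show ?thesis using group.iso_sym unfolding N_def M_def by blast
qed

end

context aqf
begin

lemma sylow_pow_p:
  assumes p: "Factorial_Ring.prime (p::nat)" and x: "x \<in> sylow_part G p"
  shows "x \<in> carrier G" "x [^] p = \<one>"
proof -
  show xc: "x \<in> carrier G" using x unfolding sylow_part_def by blast
  obtain k where k: "x [^] (p ^ k) = \<one>" using x unfolding sylow_part_def by blast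
  have "ord x dvd p ^ k" using k pow_eq_id[OF xc] by blast
  then obtain j where j: "j \<le> k" "ord x = p ^ j" using divides_primepow_nat[OF p] by blast
  have "j \<le> 1"
  proof (rule ccontr)
    assume "\<not> j \<le> 1"
    then have "p ^ 2 dvd p ^ j" by (simp add: le_imp_power_dvd)
    then have "p ^ 2 dvd ord x" using j by simp
    then have "is_unit p" using ord_squarefree[OF xc] unfolding squarefree_def by blast
    then show False using p by simp
  qed
  then have "ord x dvd p" using j by (cases j) auto
  then show "x [^] p = \<one>" using pow_eq_id[OF xc] by blast
qed

lemma ipow_pow_p: "u \<in> carrier G \<Longrightarrow> u [^] (p::nat) = \<one> \<Longrightarrow> (u [^] (k::int)) [^] p = \<one>"
proof -
  assume u: "u \<in> carrier G" and up: "u [^] p = \<one>"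
  have "(u [^] k) [^] p = (u [^] k) [^] (int p)" by (simp add: int_pow_int)
  also have "\<dots> = u [^] (k * int p)" by (rule int_pow_pow[OF u])
  also have "\<dots> = u [^] (int p * k)" by (simp add: mult.commute)
  also have "\<dots> = (u [^] (int p)) [^] k" by (rule int_pow_pow[OF u, symmetric])
  also have "\<dots> = \<one>" using up by (simp add: int_pow_int)
  finally show ?thesis .
qed

lemma sylow_card:
  assumes p: "Factorial_Ring.prime (p::nat)" "p dvd ord b" and a: "a \<in> carrier G" and b: "b \<in> carrier G"
    and ba: "ord b dvd ord a"
    and decomp: "\<And>x. x \<in> carrier G \<Longrightarrow> \<exists>(i::int) (j::int). x = a [^] i \<otimes> b [^] j"
    and F5: "\<And>(i::int) (j::int). a [^] i = b [^] j \<Longrightarrow> a [^] i = \<one>"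
  shows "card (sylow_part G p) \<le> p * p"
proof -
  have ppos: "p > 0" using p prime_gt_0_nat by blast
  have pa: "p dvd ord a" using p(2) ba by (rule dvd_trans)
  define g1 where "g1 = a [^] (ord a div p)"
  define g2 where "g2 = b [^] (ord b div p)"
  have og: "ord g1 = p" "ord g2 = p" unfolding g1_def g2_def
    by (rule ord_pow_div[OF a pa ppos], rule ord_pow_div[OF b p(2) ppos])
  have gc: "g1 \<in> carrier G" "g2 \<in> carrier G" unfolding g1_def g2_def using a b by auto
  define A where "A = ({0..<p} \<times> {0..<p} :: (nat \<times> nat) set)"
  define gm where "gm = (\<lambda>(i::nat, j::nat). g1 [^] i \<otimes> g2 [^] j)"
  have sub: "sylow_part G p \<subseteq> gm ` A"
  proof
    fix x assume xs: "x \<in> sylow_part G p"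
    have xc: "x \<in> carrier G" and xp: "x [^] p = \<one>" using sylow_pow_p[OF p(1) xs] by auto
    obtain i j :: int where ij: "x = a [^] i \<otimes> b [^] j" using decomp[OF xc] by blast
    have "x [^] p = (a [^] i) [^] p \<otimes> (b [^] j) [^] p" unfolding ij using a b by (simp add: nat_pow_distrib)
    also have "(a [^] i) [^] p = a [^] (i * int p)" using int_pow_pow[OF a, of i "int p"] by (simp add: int_pow_int)
    also have "(b [^] j) [^] p = b [^] (j * int p)" using int_pow_pow[OF b, of j "int p"] by (simp add: int_pow_int)
    finally have e: "a [^] (i * int p) \<otimes> b [^] (j * int p) = \<one>" using xp by simp
    then have "a [^] (i * int p) = inv (b [^] (j * int p))"
      using inv_equality[of "a [^] (i * int p)" "b [^] (j * int p)"] a b by (simp add: m_comm)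
    then have e2: "a [^] (i * int p) = b [^] (- (j * int p))" using b by (simp add: int_pow_neg)
    then have ea: "a [^] (i * int p) = \<one>" by (rule F5)
    then have eb: "b [^] (- (j * int p)) = \<one>" using e2 by simp
    obtain n1 where n1: "ord a = p * n1" using pa by blast
    obtain n2 where n2: "ord b = p * n2" using p(2) by blast
    have "int (ord a) dvd i * int p" using ea int_pow_eq_id[OF a] by blast
    then have "int p * int n1 dvd int p * i" using n1 by (simp add: mult.commute)
    then have "int n1 dvd i" using ppos zdvd_mult_cancel[of "int p" "int n1" i] by simp
    then obtain i' where i': "i = int n1 * i'" by blast
    have "int (ord b) dvd - (j * int p)" using eb int_pow_eq_id[OF b] by blast
    then have "int p * int n2 dvd int p * j" using n2 by (simp add: mult.commute)
    then have "int n2 dvd j" using ppos zdvd_mult_cancel[of "int p" "int n2" j] by simp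
    then obtain j' where j': "j = int n2 * j'" by blast
    have d1: "ord a div p = n1" using n1 ppos by simp
    have d2: "ord b div p = n2" using n2 ppos by simp
    have "a [^] i = g1 [^] i'" unfolding g1_def d1 i' using int_pow_pow[OF a, of "int n1" i'] by (simp add: int_pow_int)
    also have "\<dots> = g1 [^] (i' mod int p)" using pow_mod_ord[OF gc(1), of i'] og by simp
    also have "\<dots> = g1 [^] (nat (i' mod int p))" using ppos by (simp add: int_pow_int[symmetric])
    finally have ai: "a [^] i = g1 [^] (nat (i' mod int p))" .
    have "b [^] j = g2 [^] j'" unfolding g2_def d2 j' using int_pow_pow[OF b, of "int n2" j'] by (simp add: int_pow_int)
    also have "\<dots> = g2 [^] (j' mod int p)" using pow_mod_ord[OF gc(2), of j'] og by simp
    also have "\<dots> = g2 [^] (nat (j' mod int p))" using ppos by (simp add: int_pow_int[symmetric])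
    finally have bj: "b [^] j = g2 [^] (nat (j' mod int p))" .
    have "x = gm (nat (i' mod int p), nat (j' mod int p))" unfolding ij ai bj gm_def by simp
    moreover have "(nat (i' mod int p), nat (j' mod int p)) \<in> A" unfolding A_def using ppos
      by (simp add: nat_less_iff)
    ultimately show "x \<in> gm ` A" by blast
  qed
  have "card (gm ` A) \<le> card A" by (rule card_image_le) (simp add: A_def)
  moreover have "card (sylow_part G p) \<le> card (gm ` A)" using sub by (rule card_mono[rotated]) (simp add: A_def)
  ultimately show ?thesis unfolding A_def by simp
qed

lemma basis_part:
  assumes p: "Factorial_Ring.prime (p::nat)" "p dvd ord b" "p mod 4 = 1"
    and a: "a \<in> carrier G" and b: "b \<in> carrier G" and ba: "ord b dvd ord a" and ab: "lam a b \<in> \<int>"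
    and decomp: "\<And>x. x \<in> carrier G \<Longrightarrow> \<exists>(i::int) (j::int). x = a [^] i \<otimes> b [^] j"
    and F5: "\<And>(i::int) (j::int). a [^] i = b [^] j \<Longrightarrow> a [^] i = \<one>"
  shows "\<exists>g1 g2 (\<beta>::int). is_basis2 G p (sylow_part G p) g1 g2 \<and> \<not> QuadRes (int p) \<beta> \<and>
     (\<forall>e1 e2 :: int. lam (g1 [^] e1 \<otimes> g2 [^] e2) (g1 [^] e1 \<otimes> g2 [^] e2)
          - of_int (e1^2 + \<beta> * e2^2) / of_nat p \<in> \<int>)"
proof -
  have ppos: "p > 0" using p prime_gt_0_nat by blast
  have pa: "p dvd ord a" using p(2) ba by (rule dvd_trans)
  define g1 where "g1 = a [^] (ord a div p)"
  define g2 where "g2 = b [^] (ord b div p)"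
  have og: "ord g1 = p" "ord g2 = p" unfolding g1_def g2_def
    by (rule ord_pow_div[OF a pa ppos], rule ord_pow_div[OF b p(2) ppos])
  have gc: "g1 \<in> carrier G" "g2 \<in> carrier G" unfolding g1_def g2_def using a b by auto
  have pw: "g1 [^] p = \<one>" "g2 [^] p = \<one>" using og gc pow_ord_eq_1 by metis+
  have p1: "p \<noteq> 1" using p(1) by auto
  have ne: "g1 \<noteq> \<one>" "g2 \<noteq> \<one>" using og p1 by auto
  have o12: "lam g1 g2 \<in> \<int>"
  proof -
    have "zeq (lam g1 g2) (of_nat (ord a div p) * of_nat (ord b div p) * lam a b)"
      unfolding g1_def g2_def by (rule lam_pow2[OF a b])
    moreover have "of_nat (ord a div p) * of_nat (ord b div p) * lam a b \<in> \<int>" using ab by simp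
    ultimately show ?thesis using zeq_Ints_iff by blast
  qed
  obtain a1 where a1: "lam g1 g1 = of_int a1 / of_nat p" "\<not> int p dvd a1"
    using alpha_exists[OF gc(1) pw(1) ne(1) ppos] by blast
  obtain a2 where a2: "lam g2 g2 = of_int a2 / of_nat p" "\<not> int p dvd a2"
    using alpha_exists[OF gc(2) pw(2) ne(2) ppos] by blast
  have "odd p" using p(3) by presburger
  then have pint: "Factorial_Ring.prime (int p)" "odd (int p)" using p by auto
  obtain x y where xy: "int p dvd a1 * x^2 + a2 * y^2 - 1"
    using two_squares_represent[OF pint(1) a1(2) a2(2) pint(2)] by blast
  then obtain t where t: "a1 * x^2 + a2 * y^2 - 1 = int p * t" by blast
  have tq: "(of_int a1 * of_int x * of_int x + of_int a2 * of_int y * of_int y :: rat) = 1 + of_nat p * of_int t"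
  proof -
    have "(of_int (a1 * x^2 + a2 * y^2 - 1) :: rat) = of_int (int p * t)" using t by simp
    then show ?thesis by (simp add: power2_eq_square algebra_simps)
  qed
  define h1 where "h1 = g1 [^] x \<otimes> g2 [^] y"
  define h2 where "h2 = g1 [^] (- a2 * y) \<otimes> g2 [^] (a1 * x)"
  define \<beta> where "\<beta> = a1 * a2"
  have hc: "h1 \<in> carrier G" "h2 \<in> carrier G" unfolding h1_def h2_def using gc by auto
  have pb: "\<not> int p dvd \<beta>" unfolding \<beta>_def using a1(2) a2(2) pint(1) prime_dvd_mult_iff by blast
  have L11: "zeq (lam h1 h1) (1 / of_nat p)"
  proof -
    have z: "zeq (lam h1 h1) (of_int (x * x) * lam g1 g1 + of_int (y * y) * lam g2 g2)"
      by (rule lam_orth4[OF gc o12 h1_def h1_def])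
    have "of_int (x * x) * lam g1 g1 + of_int (y * y) * lam g2 g2 = 1 / of_nat p + of_int t"
      unfolding a1(1) a2(1) using tq ppos by (simp add: field_simps)
    then show ?thesis using zeq_trans[OF z zeqI[of _ _ t]] by simp
  qed
  have L12: "lam h1 h2 \<in> \<int>"
  proof -
    have z: "zeq (lam h1 h2) (of_int (x * (- a2 * y)) * lam g1 g1 + of_int (y * (a1 * x)) * lam g2 g2)"
      by (rule lam_orth4[OF gc o12 h1_def h2_def])
    have e0: "of_int (x * (- a2 * y)) * lam g1 g1 + of_int (y * (a1 * x)) * lam g2 g2 = 0"
      unfolding a1(1) a2(1) using ppos by (simp add: field_simps)
    show ?thesis using zeq_Ints_iff[OF z] unfolding e0 by simp
  qed
  have L21: "lam h2 h1 \<in> \<int>" using zeq_Ints_iff[OF symm[OF hc]] L12 by simp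
  have L22: "zeq (lam h2 h2) (of_int \<beta> / of_nat p)"
  proof -
    have z: "zeq (lam h2 h2) (of_int ((- a2 * y) * (- a2 * y)) * lam g1 g1 + of_int ((a1 * x) * (a1 * x)) * lam g2 g2)"
      by (rule lam_orth4[OF gc o12 h2_def h2_def])
    have "of_int ((- a2 * y) * (- a2 * y)) * lam g1 g1 + of_int ((a1 * x) * (a1 * x)) * lam g2 g2
        = of_int a1 * of_int a2 * (of_int a1 * of_int x * of_int x + of_int a2 * of_int y * of_int y) / of_nat p"
      unfolding a1(1) a2(1) using ppos by (simp add: field_simps)
    also have "\<dots> = of_int \<beta> / of_nat p + of_int (\<beta> * t)"
      unfolding tq \<beta>_def using ppos by (simp add: field_simps)
    finally show ?thesis using zeq_trans[OF z zeqI[of _ _ "\<beta> * t"]] by simp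
  qed
  have V: "zeq (lam (h1 [^] e1 \<otimes> h2 [^] e2) (h1 [^] e1 \<otimes> h2 [^] e2)) (of_int (e1^2 + \<beta> * e2^2) / of_nat p)"
    for e1 e2 :: int
  proof -
    have z: "zeq (lam (h1 [^] e1 \<otimes> h2 [^] e2) (h1 [^] e1 \<otimes> h2 [^] e2))
         (of_int (e1 * e1) * lam h1 h1 + of_int (e2 * e2) * lam h2 h2)"
      by (rule lam_orth4[OF hc L12 refl refl])
    have z2: "zeq (of_int (e1 * e1) * lam h1 h1 + of_int (e2 * e2) * lam h2 h2)
        (of_int (e1 * e1) * (1 / of_nat p) + of_int (e2 * e2) * (of_int \<beta> / of_nat p))"
      by (rule zeq_add[OF zeq_mult_int[OF L11] zeq_mult_int[OF L22]]) simp_all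
    have "of_int (e1 * e1) * (1 / of_nat p) + of_int (e2 * e2) * (of_int \<beta> / of_nat p)
        = (of_int (e1^2 + \<beta> * e2^2) / of_nat p :: rat)"
      using ppos by (simp add: field_simps power2_eq_square)
    then show ?thesis using zeq_trans[OF z z2] by simp
  qed
  have P1: "zeq (lam (h1 [^] e1 \<otimes> h2 [^] e2) h1) (of_int e1 / of_nat p)" for e1 e2 :: int
  proof -
    have z: "zeq (lam (h1 [^] e1 \<otimes> h2 [^] e2) h1) (of_int e1 * lam h1 h1 + of_int e2 * lam h2 h1)"
      by (rule lam_lin2[OF hc hc(1)])
    have z2: "zeq (of_int e1 * lam h1 h1 + of_int e2 * lam h2 h1) (of_int e1 * (1 / of_nat p) + 0)"
      by (rule zeq_add[OF zeq_mult_int[OF L11]]) (use L21 zeq_Ints in simp_all)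
    then show ?thesis using zeq_trans[OF z z2] by simp
  qed
  have P2: "zeq (lam (h1 [^] e1 \<otimes> h2 [^] e2) h2) (of_int (e2 * \<beta>) / of_nat p)" for e1 e2 :: int
  proof -
    have z: "zeq (lam (h1 [^] e1 \<otimes> h2 [^] e2) h2) (of_int e1 * lam h1 h2 + of_int e2 * lam h2 h2)"
      by (rule lam_lin2[OF hc hc(2)])
    have z2: "zeq (of_int e1 * lam h1 h2 + of_int e2 * lam h2 h2) (0 + of_int e2 * (of_int \<beta> / of_nat p))"
      by (rule zeq_add[OF _ zeq_mult_int[OF L22]]) (use L12 zeq_Ints in simp_all)
    then show ?thesis using zeq_trans[OF z z2] by simp
  qed
  have nqr: "\<not> QuadRes (int p) \<beta>"
  proof
    assume "QuadRes (int p) \<beta>"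
    then obtain t0 where t0: "[t0^2 = \<beta>] (mod int p)" unfolding QuadRes_def by blast
    obtain i0 where i0: "[i0^2 = -1] (mod int p)" using sq_minus_one_exists[OF p(1) p(3)] by blast
    have "[i0^2 * t0^2 + \<beta> = (-1) * \<beta> + \<beta>] (mod int p)"
      by (rule cong_add[OF cong_mult[OF i0 t0] cong_refl])
    then have "[(i0 * t0)^2 + \<beta> * 1^2 = 0] (mod int p)" by (simp add: power_mult_distrib)
    then have d: "int p dvd (i0 * t0)^2 + \<beta> * 1^2" by (simp add: cong_0_iff)
    define w where "w = h1 [^] (i0 * t0) \<otimes> h2 [^] (1::int)"
    have wc: "w \<in> carrier G" unfolding w_def using hc by simp
    have "(of_int ((i0 * t0)^2 + \<beta> * 1^2) / of_nat p :: rat) \<in> \<int>" using int_div_Ints_iff[OF ppos] d by blast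
    then have "lam w w \<in> \<int>" using zeq_Ints_iff[OF V[of "i0 * t0" 1]] unfolding w_def by blast
    then have w1: "w = \<one>" using aniso[OF wc] by blast
    have "zeq (lam w h2) 0" unfolding w1 by (rule lam_one_l[OF hc(2)])
    then have "lam w h2 \<in> \<int>" by (simp add: zeq_Ints)
    then have "(of_int (1 * \<beta>) / of_nat p :: rat) \<in> \<int>" using zeq_Ints_iff[OF P2[of "i0 * t0" 1]] unfolding w_def by blast
    then show False using int_div_Ints_iff[OF ppos] pb by simp
  qed
  define A where "A = ({0..<p} \<times> {0..<p} :: (nat \<times> nat) set)"
  define f where "f = (\<lambda>(e1::nat, e2::nat). h1 [^] e1 \<otimes> h2 [^] e2)"
  have hp: "h1 [^] p = \<one>" "h2 [^] p = \<one>"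
    unfolding h1_def h2_def using gc pw ipow_pow_p[OF gc(1) pw(1)] ipow_pow_p[OF gc(2) pw(2)]
    by (simp_all add: nat_pow_distrib)
  have fS: "f ` A \<subseteq> sylow_part G p"
  proof
    fix z assume "z \<in> f ` A"
    then obtain e1 e2 :: nat where z: "z = h1 [^] e1 \<otimes> h2 [^] e2" unfolding f_def by auto
    have zc: "z \<in> carrier G" unfolding z using hc by simp
    have "(h1 [^] e1) [^] p = (h1 [^] p) [^] e1" using hc(1) by (simp add: nat_pow_pow mult.commute)
    then have "(h1 [^] e1) [^] p = \<one>" using hp(1) by simp
    moreover have "(h2 [^] e2) [^] p = (h2 [^] p) [^] e2" using hc(2) by (simp add: nat_pow_pow mult.commute)
    then have "(h2 [^] e2) [^] p = \<one>" using hp(2) by simp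
    ultimately have "z [^] p = \<one>" unfolding z using hc by (simp add: nat_pow_distrib)
    then have "z [^] (p ^ 1) = \<one>" by simp
    then show "z \<in> sylow_part G p" unfolding sylow_part_def using zc by blast
  qed
  have h12S: "h1 \<in> sylow_part G p" "h2 \<in> sylow_part G p"
    unfolding sylow_part_def using hc hp by (auto intro!: exI[of _ 1])
  have inj: "inj_on f A"
  proof (rule inj_onI)
    fix u v assume uv: "u \<in> A" "v \<in> A" and e: "f u = f v"
    obtain e1 e2 where u: "u = (e1, e2)" by (cases u)
    obtain e1' e2' where v: "v = (e1', e2')" by (cases v)
    have e': "h1 [^] (int e1) \<otimes> h2 [^] (int e2) = h1 [^] (int e1') \<otimes> h2 [^] (int e2')"
      using e unfolding f_def u v by (simp add: int_pow_int)
    have "zeq (of_int (int e1) / of_nat p) (of_int (int e1') / of_nat p)"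
      using P1[of "int e1" "int e2"] P1[of "int e1'" "int e2'"] unfolding e' by (meson zeq_sym zeq_trans)
    then have "(of_int (int e1 - int e1') / of_nat p :: rat) \<in> \<int>" unfolding zeq_def by (simp add: diff_divide_distrib)
    then have d1: "int p dvd int e1 - int e1'" using int_div_Ints_iff[OF ppos] by blast
    have "zeq (of_int (int e2 * \<beta>) / of_nat p) (of_int (int e2' * \<beta>) / of_nat p)"
      using P2[of "int e1" "int e2"] P2[of "int e1'" "int e2'"] unfolding e' by (meson zeq_sym zeq_trans)
    then have "(of_int ((int e2 - int e2') * \<beta>) / of_nat p :: rat) \<in> \<int>" unfolding zeq_def
      by (simp add: diff_divide_distrib left_diff_distrib)
    then have "int p dvd (int e2 - int e2') * \<beta>" using int_div_Ints_iff[OF ppos] by blast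
    then have d2: "int p dvd int e2 - int e2'" using pb pint(1) prime_dvd_mult_iff by blast
    have r: "e1 < p" "e1' < p" "e2 < p" "e2' < p" using uv unfolding u v A_def by auto
    have "int e1 = int e1'" by (rule int_range_dvd_eq[OF _ _ _ _ d1]) (use r in auto)
    moreover have "int e2 = int e2'" by (rule int_range_dvd_eq[OF _ _ _ _ d2]) (use r in auto)
    ultimately show "u = v" unfolding u v by simp
  qed
  have cardf: "card (f ` A) = p * p" using card_image[OF inj] unfolding A_def by simp
  have finS: "finite (sylow_part G p)" using fin unfolding sylow_part_def by simp
  have cS: "card (sylow_part G p) \<le> p * p" by (rule sylow_card[OF p(1,2) a b ba decomp F5])
  have "f ` A = sylow_part G p"
    by (rule card_subset_eq[OF finS fS]) (use cardf cS card_mono[OF finS fS] in linarith)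
  then have "is_basis2 G p (sylow_part G p) h1 h2"
    unfolding is_basis2_def using h12S inj unfolding bij_betw_def f_def A_def by blast
  moreover have "\<forall>e1 e2 :: int. lam (h1 [^] e1 \<otimes> h2 [^] e2) (h1 [^] e1 \<otimes> h2 [^] e2)
          - of_int (e1^2 + \<beta> * e2^2) / of_nat p \<in> \<int>" using V unfolding zeq_def by blast
  ultimately show ?thesis using nqr by blast
qed

end

lemma DirProd_nat_pow:
  assumes "monoid G" "monoid H"
  shows "(g, h) [^]\<^bsub>G \<times>\<times> H\<^esub> (n::nat) = (g [^]\<^bsub>G\<^esub> n, h [^]\<^bsub>H\<^esub> n)"
  by (induction n) simp_all

lemma mod_range_eq: "0 \<le> (a::int) \<Longrightarrow> a < n \<Longrightarrow> a mod n = a" by simp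

context comm_group
begin

lemma ptorsion_cyclic:
  assumes fin: "finite (carrier G)"
    and psi: "psi \<in> iso G (integer_mod_group q' \<times>\<times> integer_mod_group q)"
    and qpos: "q' > 0" "q > 0"
    and p: "Factorial_Ring.prime (p::nat)" "p dvd q'" "\<not> p dvd q"
    and y: "y \<in> carrier G" "y [^] p = \<one>" "y \<noteq> \<one>"
    and z: "z \<in> carrier G" "z [^] p = \<one>"
  shows "\<exists>n::nat. z = y [^] n"
proof -
  let ?P = "integer_mod_group q' \<times>\<times> integer_mod_group q"
  have gP: "group ?P" by (simp add: DirProd_group)
  have hom: "psi \<in> hom G ?P" and bij: "bij_betw psi (carrier G) (carrier ?P)"
    using psi unfolding iso_def by auto
  have gh: "group_hom G ?P psi"
    unfolding group_hom_def group_hom_axioms_def using gP hom by (simp add: is_group)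
  have inj: "inj_on psi (carrier G)" using bij bij_betw_def by blast
  have car: "carrier ?P = {0..<int q'} \<times> {0..<int q}"
    using qpos by (simp add: carrier_integer_mod_group)
  have ppos: "p > 0" "p > 1" using p(1) prime_gt_0_nat prime_gt_1_nat by blast+
  obtain r where r: "q' = p * r" using p(2) by blast
  have rpos: "r > 0" using r qpos by (cases r) auto
  have psi1: "psi \<one> = (0, 0)" using group_hom.hom_one[OF gh] by simp
  have powP: "psi (x [^] n) = ((int n * fst (psi x)) mod int q', (int n * snd (psi x)) mod int q)"
    if "x \<in> carrier G" for x n
  proof -
    have "psi (x [^] n) = psi x [^]\<^bsub>?P\<^esub> n" using group_hom.hom_nat_pow[OF gh that] .
    also have "psi x = (fst (psi x), snd (psi x))" by simp
    finally show ?thesis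
      by (simp only: DirProd_nat_pow[OF group.is_monoid[OF group_integer_mod_group] group.is_monoid[OF group_integer_mod_group]] pow_integer_mod_group)
  qed
  have shape: "\<exists>k. 0 \<le> k \<and> k < int p \<and> psi x = (int r * k, 0)" if x: "x \<in> carrier G" "x [^] p = \<one>" for x
  proof -
    obtain i j where ij: "psi x = (i, j)" by (cases "psi x")
    have "psi x \<in> carrier ?P" by (rule hom_in_carrier[OF hom x(1)])
    then have "(i, j) \<in> {0..<int q'} \<times> {0..<int q}" unfolding ij car .
    then have rng: "0 \<le> i" "i < int q'" "0 \<le> j" "j < int q" by simp_all
    have "psi (x [^] p) = (0, 0)" using x(2) psi1 by simp
    then have e: "(int p * i) mod int q' = 0" "(int p * j) mod int q = 0" using powP[OF x(1), of p] ij by simp_all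
    have "int q dvd int p * j" using e(2) by (simp add: mod_eq_0_iff_dvd)
    moreover have "coprime (int q) (int p)" using p(1,3) prime_imp_coprime[of p q] by (simp add: coprime_commute)
    ultimately have "int q dvd j" using coprime_dvd_mult_right_iff by blast
    then have j0: "j = 0" using int_range_dvd_eq[of j "int q" 0] rng(3,4) qpos by simp
    have "int p * int r dvd int p * i" using e(1) r by (simp add: mod_eq_0_iff_dvd)
    then have "int r dvd i" using ppos zdvd_mult_cancel[of "int p" "int r" i] by simp
    then obtain k where k: "i = int r * k" by blast
    have "0 \<le> int r * k" using rng(1) k by simp
    then have "0 \<le> k" using rpos zero_le_mult_iff[of "int r" k] by simp
    moreover have "int r * k < int r * int p" using rng(2) k r by (simp add: mult.commute)
    then have "k < int p" using rpos mult_less_cancel_left_pos[of "int r" k "int p"] by simp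
    ultimately show ?thesis using ij k j0 by blast
  qed
  obtain k0 where k0: "0 \<le> k0" "k0 < int p" "psi y = (int r * k0, 0)" using shape[OF y(1,2)] by blast
  obtain k1 where k1: "0 \<le> k1" "k1 < int p" "psi z = (int r * k1, 0)" using shape[OF z] by blast
  have "k0 \<noteq> 0"
  proof
    assume "k0 = 0"
    then have "psi y = psi \<one>" using k0 psi1 by simp
    then show False using inj y(1,3) unfolding inj_on_def by blast
  qed
  then have "\<not> int p dvd k0" using int_range_dvd_eq[of k0 "int p" 0] k0(1,2) ppos by auto
  then have "coprime k0 (int p)" using p(1) prime_imp_coprime[of "int p" k0] by (simp add: coprime_commute)
  then obtain v where v: "[k0 * v = 1] (mod int p)" using cong_solve_coprime_int by blast
  define v' where "v' = v mod int p"
  have v'1: "0 \<le> v'" using ppos unfolding v'_def by simp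
  have v'c: "[k0 * v' = 1] (mod int p)" using v unfolding v'_def cong_def
    by (simp add: mod_mult_right_eq)
  define n where "n = nat (k1 * v')"
  have nn: "int n = k1 * v'" unfolding n_def using k1(1) v'1 by simp
  have "psi (y [^] n) = ((int n * (int r * k0)) mod int q', 0)" using powP[OF y(1), of n] k0 by simp
  also have "(int n * (int r * k0)) mod int q' = int r * k1"
  proof -
    have "[k1 * (k0 * v') = k1 * 1] (mod int p)" by (rule cong_scalar_left[OF v'c])
    then have "int p dvd k1 * (k0 * v') - k1" by (simp add: cong_iff_dvd_diff)
    then have "int r * int p dvd int r * (k1 * (k0 * v') - k1)" by (simp add: mult_dvd_mono)
    then have "int q' dvd int n * (int r * k0) - int r * k1" unfolding nn r by (simp add: algebra_simps)
    then have "(int n * (int r * k0)) mod int q' = (int r * k1) mod int q'" by (simp add: mod_eq_dvd_iff)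
    also have "\<dots> = int r * k1"
      by (rule mod_range_eq) (use k1 rpos r in \<open>simp_all add: mult.commute\<close>)
    finally show ?thesis .
  qed
  finally have "psi (y [^] n) = psi z" using k1 by simp
  then have "y [^] n = z" using inj y(1) z(1) unfolding inj_on_def by simp
  then show ?thesis by blast
qed

lemma iso_pow_shape:
  assumes psi: "psi \<in> iso G (integer_mod_group q' \<times>\<times> integer_mod_group q)" and z: "z \<in> carrier G"
  shows "psi (z [^] (n::nat)) = ((int n * fst (psi z)) mod int q', (int n * snd (psi z)) mod int q)"
proof -
  let ?P = "integer_mod_group q' \<times>\<times> integer_mod_group q"
  have gP: "group ?P" by (simp add: DirProd_group)
  have hom: "psi \<in> hom G ?P" using psi unfolding iso_def by auto
  have gh: "group_hom G ?P psi"
    unfolding group_hom_def group_hom_axioms_def using gP hom by (simp add: is_group)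
  have "psi (z [^] n) = psi z [^]\<^bsub>?P\<^esub> n" using group_hom.hom_nat_pow[OF gh z] .
  also have "psi z = (fst (psi z), snd (psi z))" by simp
  finally show ?thesis
    by (simp only: DirProd_nat_pow[OF group.is_monoid[OF group_integer_mod_group] group.is_monoid[OF group_integer_mod_group]] pow_integer_mod_group)
qed

lemma iso_one_shape:
  assumes psi: "psi \<in> iso G (integer_mod_group q' \<times>\<times> integer_mod_group q)"
  shows "psi \<one> = (0, 0)"
proof -
  let ?P = "integer_mod_group q' \<times>\<times> integer_mod_group q"
  have gP: "group ?P" by (simp add: DirProd_group)
  have hom: "psi \<in> hom G ?P" using psi unfolding iso_def by auto
  have gh: "group_hom G ?P psi"
    unfolding group_hom_def group_hom_axioms_def using gP hom by (simp add: is_group)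
  show ?thesis using group_hom.hom_one[OF gh] by simp
qed

lemma ord_pow_div_fin:
  assumes fin: "finite (carrier G)" and x: "x \<in> carrier G" and p: "p dvd ord x" "p > 0"
  shows "ord (x [^] (ord x div p)) = p"
proof -
  obtain k where k: "ord x = p * k" using p(1) by blast
  have "ord x \<ge> 1" using ord_ge_1[OF fin x] .
  then have kpos: "k > 0" using k by (cases k) auto
  have kd: "ord x div p = k" using k p(2) by simp
  have "ord (x [^] k) = ord x div k" by (rule ord_pow[OF x]) (use k kpos in auto)
  then show ?thesis unfolding kd using k kpos by simp
qed

end

context qf
begin

lemma backward:
  assumes fin: "finite (carrier G)"
    and nondeg: "\<And>x. x \<in> carrier G \<Longrightarrow> (\<forall>y\<in>carrier G. lam x y \<in> \<int>) \<Longrightarrow> x = \<one>"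
    and q': "q' > 0" "squarefree q'" "\<forall>p. Factorial_Ring.prime p \<and> p dvd q' \<longrightarrow> [p = 1] (mod 4)" "q dvd q'"
    and iso: "G \<cong> (integer_mod_group q' \<times>\<times> integer_mod_group q)"
    and basis: "\<forall>p::nat. Factorial_Ring.prime p \<and> p dvd q \<longrightarrow>
          (\<exists>g1 g2 (\<beta>::int). is_basis2 G p (sylow_part G p) g1 g2 \<and>
             \<not> QuadRes (int p) \<beta> \<and>
             (\<forall>e1 e2 :: int.
                lam (g1 [^] e1 \<otimes> g2 [^] e2) (g1 [^] e1 \<otimes> g2 [^] e2)
                - of_int (e1^2 + \<beta> * e2^2) / of_nat p \<in> \<int>))"
    and x: "x \<in> carrier G" "lam x x \<in> \<int>"
  shows "x = \<one>"
proof (rule ccontr)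
  assume xn: "x \<noteq> \<one>"
  let ?P = "integer_mod_group q' \<times>\<times> integer_mod_group q"
  obtain psi where psi: "psi \<in> iso G ?P" using iso unfolding is_iso_def by blast
  have inj: "inj_on psi (carrier G)" using psi unfolding iso_def bij_betw_def by blast
  have qpos: "q > 0" using q'(1,4) by (cases q) auto
  have E1: "z [^] q' = \<one>" if z: "z \<in> carrier G" for z
  proof -
    have "psi (z [^] q') = ((int q' * fst (psi z)) mod int q', (int q' * snd (psi z)) mod int q)"
      by (rule iso_pow_shape[OF psi z])
    also have "\<dots> = (0, 0)"
    proof -
      have "int q dvd int q' * snd (psi z)" using q'(4) by simp
      then show ?thesis by simp
    qed
    also have "\<dots> = psi \<one>" using iso_one_shape[OF psi] by simp
    finally have "psi (z [^] q') = psi \<one>" .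
    then show ?thesis using inj_onD[OF inj] z by simp
  qed
  have oq: "ord x dvd q'" using E1[OF x(1)] pow_eq_id[OF x(1)] by blast
  have "ord x \<noteq> 1" using xn ord_eq_1[OF x(1)] by simp
  then obtain p where p: "Factorial_Ring.prime p" "p dvd ord x" using prime_factor_nat by blast
  have pq': "p dvd q'" using dvd_trans[OF p(2) oq] .
  have ppos: "p > 0" "p > 1" using p(1) prime_gt_0_nat prime_gt_1_nat by blast+
  have p4: "p mod 4 = 1" using q'(3) p(1) pq' unfolding cong_def by simp
  define y where "y = x [^] (ord x div p)"
  have yc: "y \<in> carrier G" unfolding y_def using x(1) by simp
  have oy: "ord y = p" unfolding y_def by (rule ord_pow_div_fin[OF fin x(1) p(2) ppos(1)])
  have yp: "y [^] p = \<one>" using oy pow_ord_eq_1[OF yc] by simp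
  have yn: "y \<noteq> \<one>" using oy ppos by auto
  have yy: "lam y y \<in> \<int>"
  proof -
    have "zeq (lam y y) (of_int (int (ord x div p)) * of_int (int (ord x div p)) * lam x x)"
      unfolding y_def using lam_ipow2[OF x(1) x(1), of "int (ord x div p)" "int (ord x div p)"]
      by (simp add: int_pow_int)
    moreover have "of_int (int (ord x div p)) * of_int (int (ord x div p)) * lam x x \<in> \<int>" using x(2) by simp
    ultimately show ?thesis using zeq_Ints_iff by blast
  qed
  show False
  proof (cases "p dvd q")
    case True
    then obtain g1 g2 and \<beta> :: int where B: "is_basis2 G p (sylow_part G p) g1 g2" "\<not> QuadRes (int p) \<beta>"
      "\<And>e1 e2 :: int. lam (g1 [^] e1 \<otimes> g2 [^] e2) (g1 [^] e1 \<otimes> g2 [^] e2)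
                - of_int (e1^2 + \<beta> * e2^2) / of_nat p \<in> \<int>"
      using basis p(1) by blast
    have yS: "y \<in> sylow_part G p" unfolding sylow_part_def using yc yp by (auto intro!: exI[of _ 1])
    have bb: "bij_betw (\<lambda>(e1, e2). g1 [^] e1 \<otimes> g2 [^] e2) ({0..<p} \<times> {0..<p} :: (nat \<times> nat) set) (sylow_part G p)"
      using B(1) unfolding is_basis2_def by blast
    have "y \<in> (\<lambda>(e1, e2). g1 [^] e1 \<otimes> g2 [^] e2) ` ({0..<p} \<times> {0..<p} :: (nat \<times> nat) set)"
      using bb yS unfolding bij_betw_def by simp
    then obtain u where u: "u \<in> ({0..<p} \<times> {0..<p} :: (nat \<times> nat) set)"
      "y = (\<lambda>(e1, e2). g1 [^] e1 \<otimes> g2 [^] e2) u" by (rule imageE)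
    obtain e1 e2 :: nat where ue: "u = (e1, e2)" by (cases u)
    have e: "e1 < p" "e2 < p" "y = g1 [^] e1 \<otimes> g2 [^] e2" using u unfolding ue by simp_all
    have ey: "y = g1 [^] (int e1) \<otimes> g2 [^] (int e2)" using e(3) by (simp add: int_pow_int)
    have "lam y y - of_int (int e1^2 + \<beta> * int e2^2) / of_nat p \<in> \<int>" unfolding ey by (rule B(3))
    then have "lam y y - (lam y y - of_int (int e1^2 + \<beta> * int e2^2) / of_nat p) \<in> \<int>"
      by (rule Ints_diff[OF yy])
    then have "(of_int (int e1^2 + \<beta> * int e2^2) / of_nat p :: rat) \<in> \<int>" by simp
    then have d: "int p dvd int e1^2 + \<beta> * int e2^2" using int_div_Ints_iff[OF ppos(1)] by blast
    have pint: "Factorial_Ring.prime (int p)" using p(1) by simp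
    show False
    proof (cases "e2 = 0")
      case True
      then have "int p dvd int e1 ^ 2" using d by simp
      then have "int p dvd int e1" using pint prime_dvd_power by blast
      then have "e1 = 0" using e(1) int_range_dvd_eq[of "int e1" "int p" 0] by simp
      then have "y = \<one>" using e(3) True by simp
      then show False using yn by simp
    next
      case False
      then have "\<not> int p dvd int e2" using e(2) int_range_dvd_eq[of "int e2" "int p" 0] by auto
      then have "coprime (int e2) (int p)" using pint prime_imp_coprime[of "int p" "int e2"] by (simp add: coprime_commute)
      then obtain v where v: "[int e2 * v = 1] (mod int p)" using cong_solve_coprime_int by blast
      obtain i0 where i0: "[i0^2 = -1] (mod int p)" using sq_minus_one_exists[OF p(1) p4] by blast
      define t0 where "t0 = i0 * int e1 * v"
      have d1: "int p dvd i0^2 + 1" using i0 by (simp add: cong_iff_dvd_diff)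
      have d2: "int p dvd int e2 * v - 1" using v by (simp add: cong_iff_dvd_diff)
      have "t0^2 - \<beta> = (i0^2 + 1) * (int e1^2 * v^2) - (int e1^2 + \<beta> * int e2^2) * v^2
          + \<beta> * (int e2 * v + 1) * (int e2 * v - 1)"
        unfolding t0_def by (simp add: algebra_simps power2_eq_square)
      moreover have "int p dvd (i0^2 + 1) * (int e1^2 * v^2) - (int e1^2 + \<beta> * int e2^2) * v^2
          + \<beta> * (int e2 * v + 1) * (int e2 * v - 1)"
      proof -
        have A1: "int p dvd (i0^2 + 1) * (int e1^2 * v^2)" using d1 by (rule dvd_mult2)
        have A2: "int p dvd (int e1^2 + \<beta> * int e2^2) * v^2" using d by (rule dvd_mult2)
        have A3: "int p dvd \<beta> * (int e2 * v + 1) * (int e2 * v - 1)" using d2 by (rule dvd_mult)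
        show ?thesis by (rule dvd_add[OF dvd_diff[OF A1 A2] A3])
      qed
      ultimately have "int p dvd t0^2 - \<beta>" by simp
      then have "[t0^2 = \<beta>] (mod int p)" by (simp add: cong_iff_dvd_diff)
      then have "QuadRes (int p) \<beta>" unfolding QuadRes_def by blast
      then show False using B(2) by simp
    qed
  next
    case False
    have cyc: "\<exists>n::nat. z = y [^] n" if "z \<in> carrier G" "z [^] p = \<one>" for z
      by (rule ptorsion_cyclic[OF fin psi q'(1) qpos p(1) pq' False yc yp yn that])
    obtain w where w: "w \<in> carrier G" "lam y w \<notin> \<int>" using nondeg[OF yc] yn by blast
    obtain r where r: "q' = p * r" using pq' by blast
    have "\<not> p dvd r"
    proof
      assume "p dvd r"
      then have "p ^ 2 dvd q'" using r by (simp add: power2_eq_square mult_dvd_mono)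
      then have "is_unit p" using q'(2) unfolding squarefree_def by blast
      then show False using p(1) by simp
    qed
    then have "coprime (int p) (int r)" using p(1) prime_imp_coprime[of p r] by simp
    then obtain u0 where u0: "[int p * u0 = 1] (mod int r)" using cong_solve_coprime_int by blast
    then have "int r dvd int p * u0 - 1" by (simp add: cong_iff_dvd_diff)
    then obtain t where t: "int p * u0 - 1 = int r * t" by blast
    define wp where "wp = w [^] (- (int r * t))"
    have wpc: "wp \<in> carrier G" unfolding wp_def using w(1) by simp
    have "wp [^] p = wp [^] (int p)" by (simp add: int_pow_int)
    also have "\<dots> = w [^] (- (int r * t) * int p)" unfolding wp_def by (rule int_pow_pow[OF w(1)])
    also have "\<dots> = w [^] (int q' * (- t))" unfolding r by (simp add: algebra_simps)
    also have "\<dots> = (w [^] (int q')) [^] (- t)" by (rule int_pow_pow[OF w(1), symmetric])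
    also have "\<dots> = \<one>" using E1[OF w(1)] by (simp add: int_pow_int)
    finally have "wp [^] p = \<one>" .
    then obtain n :: nat where n: "wp = y [^] n" using cyc wpc by blast
    have "w = w [^] (int p * u0 + (- (int r * t)))"
    proof -
      have "int p * u0 + (- (int r * t)) = 1" using t by simp
      then show ?thesis using w(1) by simp
    qed
    also have "\<dots> = w [^] (int p * u0) \<otimes> wp" unfolding wp_def by (rule int_pow_mult[OF w(1)])
    finally have we: "w = w [^] (int p * u0) \<otimes> wp" .
    have z1: "zeq (lam y (w [^] (int p * u0) \<otimes> wp)) (lam y (w [^] (int p * u0)) + lam y wp)"
      by (rule bil_r) (use w(1) wpc yc in simp_all)
    have z2: "zeq (lam y (w [^] (int p * u0))) (of_int (int p * u0) * lam y w)" by (rule lam_ipow_r[OF w(1) yc])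
    have "of_nat p * lam y w \<in> \<int>" by (rule lam_ord[OF yc w(1) yp])
    then have "of_int u0 * (of_nat p * lam y w) \<in> \<int>" by simp
    then have i2: "lam y (w [^] (int p * u0)) \<in> \<int>" using zeq_Ints_iff[OF z2] by (simp add: mult_ac)
    have z3: "zeq (lam y wp) (of_nat n * lam y y)" unfolding n by (rule lam_pow_r[OF yc yc])
    have i3: "lam y wp \<in> \<int>" using zeq_Ints_iff[OF z3] yy by simp
    have "lam y w \<in> \<int>" using zeq_Ints_iff[OF z1] i2 i3 we by simp
    then show False using w(2) by simp
  qed
qed

end

theorem mainTheorem3:
  fixes G :: "('a, 'b) monoid_scheme" and lam :: "'a \<Rightarrow> 'a \<Rightarrow> rat"
  assumes "comm_group G"
    and "finite (carrier G)"
    and "odd (order G)"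
    and "\<forall>m::nat. m dvd order G \<longrightarrow> m mod 4 \<noteq> 3"
    and "sym_bilinear_QZ G lam"
    and "nondegenerate_QZ G lam"
  shows "isotropic_set G lam = {\<one>\<^bsub>G\<^esub>} \<longleftrightarrow>
    (\<exists>q' q :: nat.
       q' > 0 \<and> squarefree q' \<and> (\<forall>p. Factorial_Ring.prime p \<and> p dvd q' \<longrightarrow> [p = 1] (mod 4)) \<and>
       q dvd q' \<and>
       G \<cong> (integer_mod_group q' \<times>\<times> integer_mod_group q) \<and>
       (\<forall>p::nat. Factorial_Ring.prime p \<and> p dvd q \<longrightarrow>
          (\<exists>g1 g2 (\<beta>::int). is_basis2 G p (sylow_part G p) g1 g2 \<and>
             \<not> QuadRes (int p) \<beta> \<and>
             (\<forall>e1 e2 :: int.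
                lam (g1 [^]\<^bsub>G\<^esub> e1 \<otimes>\<^bsub>G\<^esub> g2 [^]\<^bsub>G\<^esub> e2)
                    (g1 [^]\<^bsub>G\<^esub> e1 \<otimes>\<^bsub>G\<^esub> g2 [^]\<^bsub>G\<^esub> e2)
                - of_int (e1^2 + \<beta> * e2^2) / of_nat p \<in> \<int>))))"
proof -
  interpret cg: comm_group G by (rule assms(1))
  interpret Q: qf G lam
  proof (unfold_locales)
    fix x y assume "x \<in> carrier G" "y \<in> carrier G"
    then show "zeq (lam x y) (lam y x)" using assms(5) unfolding sym_bilinear_QZ_def zeq_def by blast
  next
    fix x y z assume "x \<in> carrier G" "y \<in> carrier G" "z \<in> carrier G"
    then show "zeq (lam (x \<otimes>\<^bsub>G\<^esub> y) z) (lam x z + lam y z)"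
      using assms(5) unfolding sym_bilinear_QZ_def zeq_def by blast
  qed
  have nondeg: "\<And>x. x \<in> carrier G \<Longrightarrow> (\<forall>y\<in>carrier G. lam x y \<in> \<int>) \<Longrightarrow> x = \<one>\<^bsub>G\<^esub>"
    using assms(6) unfolding nondegenerate_QZ_def by blast
  have p4: "p mod 4 = 1" if "Factorial_Ring.prime p" "p dvd order G" for p
  proof -
    have "odd p"
    proof
      assume "even p"
      then have "even (order G)" using that(2) dvd_trans by blast
      then show False using assms(3) by simp
    qed
    moreover have "p mod 4 \<noteq> 3" using assms(4) that(2) by blast
    ultimately show ?thesis by presburger
  qed
  show ?thesis
  proof
    assume iso0: "isotropic_set G lam = {\<one>\<^bsub>G\<^esub>}"
    interpret A: aqf G lam
    proof (unfold_locales)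
      show "finite (carrier G)" by (rule assms(2))
    next
      fix x assume "x \<in> carrier G" "lam x x \<in> \<int>"
      then have "x \<in> isotropic_set G lam" unfolding isotropic_set_def by blast
      then show "x = \<one>\<^bsub>G\<^esub>" using iso0 by blast
    qed
    have oddp: "odd p" if "Factorial_Ring.prime p" "p dvd order G" for p
      using p4[OF that] by presburger
    obtain a b where ab: "a \<in> carrier G" "b \<in> carrier G" "cg.ord b dvd cg.ord a" "lam a b \<in> \<int>"
      "\<And>x. x \<in> carrier G \<Longrightarrow> \<exists>(i::int) (j::int). x = a [^]\<^bsub>G\<^esub> i \<otimes>\<^bsub>G\<^esub> b [^]\<^bsub>G\<^esub> j"
      "\<And>(i::int) (j::int). a [^]\<^bsub>G\<^esub> i = b [^]\<^bsub>G\<^esub> j \<Longrightarrow> a [^]\<^bsub>G\<^esub> i = \<one>\<^bsub>G\<^esub>"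
      using A.decomp_struct[OF oddp] by blast
    have pos: "cg.ord a > 0" "cg.ord b > 0" using A.ord_pos ab(1,2) by auto
    have I: "G \<cong> (integer_mod_group (cg.ord a) \<times>\<times> integer_mod_group (cg.ord b))"
      by (rule cg.iso_from_decomp[OF ab(1,2) pos ab(5) ab(6)])
    have sq: "squarefree (cg.ord a)" by (rule A.ord_squarefree[OF ab(1)])
    have aG: "cg.ord a dvd order G" by (rule cg.ord_dvd_group_order[OF ab(1)])
    have pr: "\<forall>p. Factorial_Ring.prime p \<and> p dvd cg.ord a \<longrightarrow> [p = 1] (mod 4)"
    proof (intro allI impI)
      fix p assume "Factorial_Ring.prime p \<and> p dvd cg.ord a"
      then have "p mod 4 = 1" using p4 aG dvd_trans by blast
      then show "[p = 1] (mod 4)" unfolding cong_def by simp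
    qed
    have bs: "\<forall>p::nat. Factorial_Ring.prime p \<and> p dvd cg.ord b \<longrightarrow>
          (\<exists>g1 g2 (\<beta>::int). is_basis2 G p (sylow_part G p) g1 g2 \<and>
             \<not> QuadRes (int p) \<beta> \<and>
             (\<forall>e1 e2 :: int.
                lam (g1 [^]\<^bsub>G\<^esub> e1 \<otimes>\<^bsub>G\<^esub> g2 [^]\<^bsub>G\<^esub> e2)
                    (g1 [^]\<^bsub>G\<^esub> e1 \<otimes>\<^bsub>G\<^esub> g2 [^]\<^bsub>G\<^esub> e2)
                - of_int (e1^2 + \<beta> * e2^2) / of_nat p \<in> \<int>))"
    proof (intro allI impI)
      fix p :: nat assume p: "Factorial_Ring.prime p \<and> p dvd cg.ord b"
      have "p dvd order G" using p ab(3) aG dvd_trans by blast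
      then have "p mod 4 = 1" using p4 p by blast
      then show "\<exists>g1 g2 (\<beta>::int). is_basis2 G p (sylow_part G p) g1 g2 \<and>
             \<not> QuadRes (int p) \<beta> \<and>
             (\<forall>e1 e2 :: int.
                lam (g1 [^]\<^bsub>G\<^esub> e1 \<otimes>\<^bsub>G\<^esub> g2 [^]\<^bsub>G\<^esub> e2)
                    (g1 [^]\<^bsub>G\<^esub> e1 \<otimes>\<^bsub>G\<^esub> g2 [^]\<^bsub>G\<^esub> e2)
                - of_int (e1^2 + \<beta> * e2^2) / of_nat p \<in> \<int>)"
        using A.basis_part[of p b a] p ab by blast
    qed
    show "\<exists>q' q :: nat.
       q' > 0 \<and> squarefree q' \<and> (\<forall>p. Factorial_Ring.prime p \<and> p dvd q' \<longrightarrow> [p = 1] (mod 4)) \<and>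
       q dvd q' \<and>
       G \<cong> (integer_mod_group q' \<times>\<times> integer_mod_group q) \<and>
       (\<forall>p::nat. Factorial_Ring.prime p \<and> p dvd q \<longrightarrow>
          (\<exists>g1 g2 (\<beta>::int). is_basis2 G p (sylow_part G p) g1 g2 \<and>
             \<not> QuadRes (int p) \<beta> \<and>
             (\<forall>e1 e2 :: int.
                lam (g1 [^]\<^bsub>G\<^esub> e1 \<otimes>\<^bsub>G\<^esub> g2 [^]\<^bsub>G\<^esub> e2)
                    (g1 [^]\<^bsub>G\<^esub> e1 \<otimes>\<^bsub>G\<^esub> g2 [^]\<^bsub>G\<^esub> e2)
                - of_int (e1^2 + \<beta> * e2^2) / of_nat p \<in> \<int>)))"
      using pos(1) sq pr ab(3) I bs by blast
  next
    assume "\<exists>q' q :: nat.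
       q' > 0 \<and> squarefree q' \<and> (\<forall>p. Factorial_Ring.prime p \<and> p dvd q' \<longrightarrow> [p = 1] (mod 4)) \<and>
       q dvd q' \<and>
       G \<cong> (integer_mod_group q' \<times>\<times> integer_mod_group q) \<and>
       (\<forall>p::nat. Factorial_Ring.prime p \<and> p dvd q \<longrightarrow>
          (\<exists>g1 g2 (\<beta>::int). is_basis2 G p (sylow_part G p) g1 g2 \<and>
             \<not> QuadRes (int p) \<beta> \<and>
             (\<forall>e1 e2 :: int.
                lam (g1 [^]\<^bsub>G\<^esub> e1 \<otimes>\<^bsub>G\<^esub> g2 [^]\<^bsub>G\<^esub> e2)
                    (g1 [^]\<^bsub>G\<^esub> e1 \<otimes>\<^bsub>G\<^esub> g2 [^]\<^bsub>G\<^esub> e2)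
                - of_int (e1^2 + \<beta> * e2^2) / of_nat p \<in> \<int>)))"
    then obtain q' q :: nat where H: "q' > 0" "squarefree q'"
      "\<forall>p. Factorial_Ring.prime p \<and> p dvd q' \<longrightarrow> [p = 1] (mod 4)" "q dvd q'"
      "G \<cong> (integer_mod_group q' \<times>\<times> integer_mod_group q)"
      "\<forall>p::nat. Factorial_Ring.prime p \<and> p dvd q \<longrightarrow>
          (\<exists>g1 g2 (\<beta>::int). is_basis2 G p (sylow_part G p) g1 g2 \<and>
             \<not> QuadRes (int p) \<beta> \<and>
             (\<forall>e1 e2 :: int.
                lam (g1 [^]\<^bsub>G\<^esub> e1 \<otimes>\<^bsub>G\<^esub> g2 [^]\<^bsub>G\<^esub> e2)
                    (g1 [^]\<^bsub>G\<^esub> e1 \<otimes>\<^bsub>G\<^esub> g2 [^]\<^bsub>G\<^esub> e2)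
                - of_int (e1^2 + \<beta> * e2^2) / of_nat p \<in> \<int>))"
      by blast
    show "isotropic_set G lam = {\<one>\<^bsub>G\<^esub>}"
    proof
      show "isotropic_set G lam \<subseteq> {\<one>\<^bsub>G\<^esub>}"
      proof
        fix x assume "x \<in> isotropic_set G lam"
        then have x: "x \<in> carrier G" "lam x x \<in> \<int>" unfolding isotropic_set_def by auto
        have "x = \<one>\<^bsub>G\<^esub>" by (rule Q.backward[OF assms(2) nondeg H x])
        then show "x \<in> {\<one>\<^bsub>G\<^esub>}" by simp
      qed
    next
      have "zeq (lam \<one>\<^bsub>G\<^esub> \<one>\<^bsub>G\<^esub>) 0" by (rule Q.lam_one_l) simp
      then have "lam \<one>\<^bsub>G\<^esub> \<one>\<^bsub>G\<^esub> \<in> \<int>" by (simp add: zeq_Ints)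
      then show "{\<one>\<^bsub>G\<^esub>} \<subseteq> isotropic_set G lam" unfolding isotropic_set_def by simp
    qed
  qed
qed

end
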